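(* Let $W=\mathfrak S_n$ with simple reflections $s_i=(i,i+1)$, $1\le i\le n-1$, let $w_0$ be the longest element of $W$, $I=\{s_1,\dots,s_{n-2}\}$ and $w_I$ the longest element of the parabolic subgroup $W_I$. Then in $\mathcal H_v(W)$ $$C'_{s_1w_0}=v^{-1}C'_{w_0}-v^{-1}\,t_{s_1s_2\cdots s_{n-1}}\,C'_{w_I}.$$
   Context: $\mathcal H_v(W)$ is the Iwahori–Hecke algebra of $W$ over $\mathbb Z[v,v^{-1}]$ with standard basis $(t_w)_{w\in W}$ satisfying $(t_s+v)(t_s-v^{-1})=0$ for each simple reflection $s$, and $(C'_w)_{w\in W}$ is its Kazhdan–Lusztig basis, normalized so that $C'_s=t_s+v$ for simple $s$. *)

theory Defs
  imports "HOL-Library.Poly_Mapping" "HOL-Combinatorics.Permutations" "HOL-Combinatorics.Transposition"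
begin

section \<open>Laurent polynomials Z[v,v^-1] as the group ring Z[Z]\<close>

type_synonym lpoly = "int \<Rightarrow>\<^sub>0 int"

definition vv :: lpoly where "vv = Poly_Mapping.single 1 1"
definition vinv :: lpoly where "vinv = Poly_Mapping.single (-1) 1"

definition lbar :: "lpoly \<Rightarrow> lpoly" where "lbar f = Poly_Mapping.map_key uminus f"

definition in_vZv :: "lpoly \<Rightarrow> bool" where
  "in_vZv f \<longleftrightarrow> (\<forall>k. k \<le> 0 \<longrightarrow> Poly_Mapping.lookup f k = 0)"

type_synonym perm = "nat \<Rightarrow> nat"

definition Sn :: "nat \<Rightarrow> perm set" where "Sn n = {p. p permutes {1..n}}"

definition sref :: "nat \<Rightarrow> perm" where "sref i = transpose i (Suc i)"

definition wprod :: "nat list \<Rightarrow> perm" where "wprod xs = foldr (\<lambda>i p. sref i \<circ> p) xs id"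

text \<open>Coxeter length = number of inversions\<close>
definition len :: "nat \<Rightarrow> perm \<Rightarrow> nat" where
  "len n w = card {(i,j). i \<in> {1..n} \<and> j \<in> {1..n} \<and> i < j \<and> w j < w i}"

definition rw :: "nat \<Rightarrow> perm \<Rightarrow> nat list" where
  "rw n w = (SOME xs. set xs \<subseteq> {1..<n} \<and> wprod xs = w \<and> length xs = len n w)"

definition parab :: "nat set \<Rightarrow> perm set" where
  "parab J = {wprod xs | xs. set xs \<subseteq> J}"

definition longest :: "nat \<Rightarrow> nat set \<Rightarrow> perm" where
  "longest n J = (THE w. w \<in> parab J \<and> (\<forall>u \<in> parab J. len n u \<le> len n w))"

text \<open>An element is its coefficient function w.r.t. the standard basis (t_w);
  coefficients of non-elements of S_n are zero.\<close>
type_synonym hecke = "perm \<Rightarrow> lpoly"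

definition tb :: "nat \<Rightarrow> perm \<Rightarrow> hecke" where
  "tb n w = (\<lambda>x. if x = w \<and> w \<in> Sn n then 1 else 0)"

definition hone :: "nat \<Rightarrow> hecke" where "hone n = tb n id"

definition hadd :: "hecke \<Rightarrow> hecke \<Rightarrow> hecke" where "hadd a b = (\<lambda>x. a x + b x)"
definition hsub :: "hecke \<Rightarrow> hecke \<Rightarrow> hecke" where "hsub a b = (\<lambda>x. a x - b x)"
definition hscale :: "lpoly \<Rightarrow> hecke \<Rightarrow> hecke" where "hscale c a = (\<lambda>x. c * a x)"

text \<open>Left multiplication by t_{s_i}, using
  t_s t_w = t_{sw} if l(sw) > l(w), and t_s t_w = t_{sw} + (v^-1 - v) t_w otherwise
  (equivalent to (t_s + v)(t_s - v^-1) = 0 together with t_s t_w = t_{sw} for l(sw) > l(w)).\<close>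
definition Ls :: "nat \<Rightarrow> nat \<Rightarrow> hecke \<Rightarrow> hecke" where
  "Ls n i h = (\<lambda>x. h (sref i \<circ> x) +
      (if len n (sref i \<circ> x) < len n x then (vinv - vv) * h x else 0))"

text \<open>Left multiplication by t_w = t_{s_{i1}} ... t_{s_{ik}} (reduced word).\<close>
definition Tw :: "nat \<Rightarrow> perm \<Rightarrow> hecke \<Rightarrow> hecke" where
  "Tw n w h = foldr (Ls n) (rw n w) h"

definition hmult :: "nat \<Rightarrow> hecke \<Rightarrow> hecke \<Rightarrow> hecke" where
  "hmult n a b = (\<lambda>x. \<Sum>w\<in>Sn n. a w * Tw n w b x)"

text \<open>Bar involution: the ring involution with v -> v^-1 and t_s -> t_s^-1 = t_s + v - v^-1;
  hence bar(t_w) = bar(t_{s_{i1}}) ... bar(t_{s_{ik}}) for a reduced word.\<close>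
definition barT :: "nat \<Rightarrow> perm \<Rightarrow> hecke" where
  "barT n w = foldr (\<lambda>i h. hadd (Ls n i h) (hscale (vv - vinv) h)) (rw n w) (hone n)"

definition hbar :: "nat \<Rightarrow> hecke \<Rightarrow> hecke" where
  "hbar n h = (\<lambda>x. \<Sum>w\<in>Sn n. lbar (h w) * barT n w x)"

definition KL :: "nat \<Rightarrow> perm \<Rightarrow> hecke" where
  "KL n w = (THE c. (\<forall>x. x \<notin> Sn n \<longrightarrow> c x = 0) \<and> hbar n c = c \<and> c w = 1 \<and>
      (\<forall>y \<in> Sn n. y \<noteq> w \<longrightarrow> in_vZv (c y)))"

end

theory Submission
  imports Defs
begin

definition vp :: "int \<Rightarrow> lpoly" where "vp k = Poly_Mapping.single k 1"

lemma lookup_lbar: "Poly_Mapping.lookup (lbar f) k = Poly_Mapping.lookup f (-k)"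
proof -
  have i: "inj (uminus :: int \<Rightarrow> int)" by (simp add: inj_def)
  show ?thesis unfolding lbar_def map_key.rep_eq[OF i] by simp
qed

lemma lbar_add: "lbar (f + g) = lbar f + lbar g"
  by (rule poly_mapping_eqI) (simp add: lookup_lbar lookup_add)

lemma lbar_minus: "lbar (f - g) = lbar f - lbar g"
  by (rule poly_mapping_eqI) (simp add: lookup_lbar lookup_minus)

lemma lbar_zero[simp]: "lbar 0 = 0"
  by (rule poly_mapping_eqI) (simp add: lookup_lbar)

lemma lbar_mult: "lbar (f * g) = lbar f * lbar g"
proof (rule poly_mapping_eqI)
  fix k
  have "Poly_Mapping.lookup (lbar f * lbar g) k =
     (\<Sum>l. Poly_Mapping.lookup f (-l) * (\<Sum>q. Poly_Mapping.lookup g (-q) when k = l + q))"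
    by (simp add: lookup_mult lookup_lbar)
  also have "\<dots> = (\<Sum>l. Poly_Mapping.lookup f l * (\<Sum>q. Poly_Mapping.lookup g q when -k = l + q))"
  proof (rule sym, rule Sum_any.reindex_cong[where l=uminus])
    show "bij (uminus :: int \<Rightarrow> int)" by (rule bij_uminus)
    show "(\<lambda>l. Poly_Mapping.lookup f l * (\<Sum>q. Poly_Mapping.lookup g q when - k = l + q)) \<circ> uminus =
      (\<lambda>l. Poly_Mapping.lookup f (- l) * (\<Sum>q. Poly_Mapping.lookup g (- q) when k = l + q))"
    proof
      fix l
      have "(\<Sum>q. Poly_Mapping.lookup g q when - k = - l + q) = (\<Sum>q. Poly_Mapping.lookup g (- q) when k = l + q)"
      proof (rule Sum_any.reindex_cong[where l=uminus])
        show "bij (uminus :: int \<Rightarrow> int)" by (rule bij_uminus)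
        show "(\<lambda>q. Poly_Mapping.lookup g q when - k = - l + q) \<circ> uminus = (\<lambda>q. Poly_Mapping.lookup g (- q) when k = l + q)"
          by (rule ext) (auto simp: when_def)
      qed
      then show "((\<lambda>l. Poly_Mapping.lookup f l * (\<Sum>q. Poly_Mapping.lookup g q when - k = l + q)) \<circ> uminus) l =
      Poly_Mapping.lookup f (- l) * (\<Sum>q. Poly_Mapping.lookup g (- q) when k = l + q)" by simp
    qed
  qed
  also have "\<dots> = Poly_Mapping.lookup (lbar (f * g)) k" by (simp add: lookup_mult lookup_lbar)
  finally show "Poly_Mapping.lookup (lbar (f * g)) k = Poly_Mapping.lookup (lbar f * lbar g) k" by simp
qed

lemma lbar_vp[simp]: "lbar (vp k) = vp (-k)"
  by (rule poly_mapping_eqI) (simp add: lookup_lbar vp_def lookup_single when_def)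

lemma vp_add: "vp a * vp b = vp (a + b)"
  by (simp add: vp_def mult_single)

lemma vp0[simp]: "vp 0 = 1"
  by (simp add: vp_def one_poly_mapping.abs_eq single.abs_eq)

lemma vv_vp: "vv = vp 1" and vinv_vp: "vinv = vp (-1)"
  by (simp_all add: vv_def vinv_def vp_def)

lemma lbar_one[simp]: "lbar 1 = 1"
  using lbar_vp[of 0] by simp

lemma vv_vinv: "vv * vinv = 1"
  by (simp add: vv_vp vinv_vp vp_add)

lemma vZv_bar: assumes "in_vZv f" "lbar f = f" shows "f = 0"
proof (rule poly_mapping_eqI)
  fix k
  show "Poly_Mapping.lookup f k = Poly_Mapping.lookup 0 k"
  proof (cases "k \<le> 0")
    case True then show ?thesis using assms(1) unfolding in_vZv_def by simp
  next
    case False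
    have "Poly_Mapping.lookup f k = Poly_Mapping.lookup (lbar f) k" using assms(2) by simp
    also have "\<dots> = Poly_Mapping.lookup f (-k)" by (rule lookup_lbar)
    also have "\<dots> = 0" using assms(1) False unfolding in_vZv_def by simp
    finally show ?thesis by simp
  qed
qed

lemma vZv_diff: "in_vZv f \<Longrightarrow> in_vZv g \<Longrightarrow> in_vZv (f - g)"
  by (simp add: in_vZv_def lookup_minus)

lemma vZv_0[simp]: "in_vZv 0"
  by (simp add: in_vZv_def)

lemma vZv_vp: "0 < k \<Longrightarrow> in_vZv (vp k)"
  by (simp add: in_vZv_def vp_def lookup_single when_def)


definition invs :: "nat \<Rightarrow> perm \<Rightarrow> (nat \<times> nat) set" where
  "invs n x = {(i,j). i \<in> {1..n} \<and> j \<in> {1..n} \<and> i < j \<and> x j < x i}"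

lemma len_invs: "len n x = card (invs n x)"
  by (simp add: len_def invs_def)

lemma mem_invs: "(p,q) \<in> invs n x \<longleftrightarrow> p \<in> {1..n} \<and> q \<in> {1..n} \<and> p < q \<and> x q < x p"
  by (simp add: invs_def)

lemma finite_invs[simp]: "finite (invs n x)"
  by (rule finite_subset[of _ "{1..n} \<times> {1..n}"]) (auto simp: invs_def)

lemma sref_perm: "1 \<le> i \<Longrightarrow> i < m \<Longrightarrow> sref i permutes {1..m}"
  unfolding sref_def by (rule permutes_swap_id) auto

lemma sref_sref[simp]: "sref i (sref i k) = k"
  by (simp add: sref_def)

lemma sref_sref_comp[simp]: "sref i \<circ> (sref i \<circ> x) = x"
  by (simp add: fun_eq_iff)

lemma comp_sref_sref[simp]: "(x \<circ> sref i) \<circ> sref i = x"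
  by (simp add: fun_eq_iff)

lemma Sn_iff: "x \<in> Sn n \<longleftrightarrow> x permutes {1..n}" by (simp add: Sn_def)

lemma Sn_lcomp: "1 \<le> i \<Longrightarrow> i < m \<Longrightarrow> x \<in> Sn m \<Longrightarrow> sref i \<circ> x \<in> Sn m"
  unfolding Sn_def mem_Collect_eq by (rule permutes_compose[OF _ sref_perm])

lemma Sn_rcomp: "1 \<le> i \<Longrightarrow> i < m \<Longrightarrow> x \<in> Sn m \<Longrightarrow> x \<circ> sref i \<in> Sn m"
  unfolding Sn_def mem_Collect_eq by (rule permutes_compose[OF sref_perm])

lemma Sn_lcomp_iff: "1 \<le> i \<Longrightarrow> i < m \<Longrightarrow> sref i \<circ> x \<in> Sn m \<longleftrightarrow> x \<in> Sn m"
  using Sn_lcomp[of i m x] Sn_lcomp[of i m "sref i \<circ> x"] by auto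

lemma Sn_rcomp_iff: "1 \<le> i \<Longrightarrow> i < m \<Longrightarrow> x \<circ> sref i \<in> Sn m \<longleftrightarrow> x \<in> Sn m"
  using Sn_rcomp[of i m x] Sn_rcomp[of i m "x \<circ> sref i"] by auto

lemma Sn_mono: "m \<le> n \<Longrightarrow> x \<in> Sn m \<Longrightarrow> x \<in> Sn n"
  unfolding Sn_def mem_Collect_eq by (erule permutes_subset) simp

lemma Sn_inj: "x \<in> Sn n \<Longrightarrow> x a = x b \<Longrightarrow> a = b"
  using permutes_inj[of x "{1..n}"] unfolding Sn_def inj_def by blast

lemma Sn_range: "x \<in> Sn n \<Longrightarrow> a \<in> {1..n} \<Longrightarrow> x a \<in> {1..n}"
  using permutes_in_image[of x "{1..n}" a] by (simp add: Sn_def)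

lemma Sn_out: "x \<in> Sn n \<Longrightarrow> a \<notin> {1..n} \<Longrightarrow> x a = a"
  using permutes_not_in[of x "{1..n}" a] by (simp add: Sn_def)

lemma Sn_id[simp]: "id \<in> Sn n" by (simp add: Sn_def)

lemma Sn_finite[simp]: "finite (Sn n)"
  unfolding Sn_def by (rule finite_permutations) simp

lemma sref_order:
  assumes "p \<noteq> q" "\<not> (p = i \<and> q = Suc i)" "\<not> (p = Suc i \<and> q = i)"
  shows "sref i p < sref i q \<longleftrightarrow> p < q"
  using assms unfolding sref_def transpose_def by auto

lemma sref_in: "1 \<le> i \<Longrightarrow> i < n \<Longrightarrow> sref i a \<in> {1..n} \<longleftrightarrow> a \<in> {1..n}"
  unfolding sref_def transpose_def by auto

lemma len_lmult:
  assumes x: "x \<in> Sn n" and i: "1 \<le> i" "i < n" and ab: "x a = i" "x b = Suc i" "a < b"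
  shows "len n (sref i \<circ> x) = Suc (len n x)"
proof -
  have ain: "a \<in> {1..n}" using ab(1) i x by (metis Sn_out atLeastAtMost_iff le_trans less_imp_le_nat)
  have bin: "b \<in> {1..n}" using ab(2) i x by (metis Sn_out atLeastAtMost_iff Suc_leI le_SucI)
  have eq: "invs n (sref i \<circ> x) = insert (a,b) (invs n x)"
  proof (rule set_eqI, clarify)
    fix p q
    show "(p,q) \<in> invs n (sref i \<circ> x) \<longleftrightarrow> (p,q) \<in> insert (a,b) (invs n x)"
    proof (cases "(p,q) = (a,b)")
      case True
      have "sref i (x b) < sref i (x a)" using ab by (simp add: sref_def)
      then show ?thesis using ain bin ab True unfolding mem_invs insert_iff o_apply by simp
    next
      case False
      show ?thesis
      proof (cases "p < q")
        case True
        have pq: "x p \<noteq> x q" using Sn_inj[OF x] True by auto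
        have n1: "\<not> (x q = i \<and> x p = Suc i)"
        proof
          assume "x q = i \<and> x p = Suc i"
          then have "q = a" "p = b" using Sn_inj[OF x] ab by auto
          then show False using True ab by simp
        qed
        have n2: "\<not> (x q = Suc i \<and> x p = i)"
        proof
          assume "x q = Suc i \<and> x p = i"
          then have "q = b" "p = a" using Sn_inj[OF x] ab by auto
          then show False using False by simp
        qed
        have "sref i (x q) < sref i (x p) \<longleftrightarrow> x q < x p"
          by (rule sref_order) (use pq n1 n2 in auto)
        then show ?thesis using False unfolding mem_invs insert_iff o_apply by blast
      next
        case False
        then show ?thesis using \<open>(p,q) \<noteq> (a,b)\<close> ab unfolding mem_invs insert_iff o_apply by simp
      qed
    qed
  qed
  have "(a,b) \<notin> invs n x" using ab unfolding mem_invs by simp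
  then show ?thesis unfolding len_invs eq by simp
qed

lemma len_lmult_down:
  assumes x: "x \<in> Sn n" and i: "1 \<le> i" "i < n" and ab: "x a = Suc i" "x b = i" "a < b"
  shows "len n x = Suc (len n (sref i \<circ> x))"
proof -
  have "len n (sref i \<circ> (sref i \<circ> x)) = Suc (len n (sref i \<circ> x))"
    by (rule len_lmult[OF Sn_lcomp[OF i x] i, of a b]) (simp_all add: sref_def ab)
  then show ?thesis by simp
qed

lemma invs_rmult_mem:
  assumes j: "1 \<le> j" "j < n" and ne: "(p,q) \<noteq> (j, Suc j)" "(p,q) \<noteq> (Suc j, j)"
  shows "(p,q) \<in> invs n (x \<circ> sref j) \<longleftrightarrow> (sref j p, sref j q) \<in> invs n x"
proof (cases "p = q")
  case True then show ?thesis unfolding mem_invs by simp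
next
  case False
  have o: "sref j p < sref j q \<longleftrightarrow> p < q" by (rule sref_order) (use False ne in auto)
  have ip: "sref j p \<in> {1..n} \<longleftrightarrow> p \<in> {1..n}" by (rule sref_in[OF j])
  have iq: "sref j q \<in> {1..n} \<longleftrightarrow> q \<in> {1..n}" by (rule sref_in[OF j])
  show ?thesis unfolding mem_invs o_apply using o ip iq by auto
qed

lemma len_rmult:
  assumes x: "x \<in> Sn n" and j: "1 \<le> j" "j < n" and lt: "x j < x (Suc j)"
  shows "len n (x \<circ> sref j) = Suc (len n x)"
proof -
  define \<tau> where "\<tau> = (\<lambda>pq. (sref j (fst pq), sref j (snd pq)))"
  have tt: "\<tau> (\<tau> pq) = pq" for pq by (simp add: \<tau>_def)
  have inj: "inj \<tau>" by (metis injI tt)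
  have jin: "(j, Suc j) \<in> invs n (x \<circ> sref j)" using j lt by (simp add: invs_def sref_def)
  have jnot: "(j, Suc j) \<notin> invs n x" using lt by (simp add: invs_def)
  have sjnot: "(Suc j, j) \<notin> invs n y" for y by (simp add: invs_def)
  have tj: "\<tau> (j, Suc j) = (Suc j, j)" by (simp add: \<tau>_def sref_def)
  have tj2: "\<tau> (Suc j, j) = (j, Suc j)" by (simp add: \<tau>_def sref_def)
  have eq: "invs n (x \<circ> sref j) = insert (j, Suc j) (\<tau> ` invs n x)"
  proof (rule set_eqI)
    fix pq :: "nat \<times> nat"
    obtain p q where pq: "pq = (p,q)" by fastforce
    show "pq \<in> invs n (x \<circ> sref j) \<longleftrightarrow> pq \<in> insert (j, Suc j) (\<tau> ` invs n x)"
    proof (cases "pq = (j, Suc j)")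
      case True then show ?thesis using jin by simp
    next
      case F1: False
      show ?thesis
      proof (cases "pq = (Suc j, j)")
        case True
        have "pq \<notin> \<tau> ` invs n x"
        proof
          assume "pq \<in> \<tau> ` invs n x"
          then have "\<tau> pq \<in> \<tau> ` \<tau> ` invs n x" by blast
          then have "(j, Suc j) \<in> invs n x" using tj2 True by (simp add: image_comp tt)
          with jnot show False by simp
        qed
        then show ?thesis using True sjnot by auto
      next
        case F2: False
        have "pq \<in> \<tau> ` invs n x \<longleftrightarrow> \<tau> pq \<in> invs n x"
        proof
          assume "pq \<in> \<tau> ` invs n x"
          then obtain r where "r \<in> invs n x" "pq = \<tau> r" by blast
          then show "\<tau> pq \<in> invs n x" by (simp add: tt)
        next
          assume "\<tau> pq \<in> invs n x"
          then have "\<tau> (\<tau> pq) \<in> \<tau> ` invs n x" by blast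
          then show "pq \<in> \<tau> ` invs n x" by (simp add: tt)
        qed
        moreover have "pq \<in> invs n (x \<circ> sref j) \<longleftrightarrow> \<tau> pq \<in> invs n x"
          using invs_rmult_mem[OF j, of p q x] F1 F2 by (simp add: pq \<tau>_def)
        ultimately show ?thesis using F1 by simp
      qed
    qed
  qed
  have "(j, Suc j) \<notin> \<tau> ` invs n x"
  proof
    assume "(j, Suc j) \<in> \<tau> ` invs n x"
    then have "\<tau> (j, Suc j) \<in> \<tau> ` \<tau> ` invs n x" by blast
    then have "(Suc j, j) \<in> invs n x" using tj by (simp add: image_comp tt)
    with sjnot show False by simp
  qed
  then show ?thesis unfolding len_invs eq
    using card_image[OF inj_on_subset[OF inj subset_UNIV]] by simp
qed

lemma len_rmult_down:
  assumes x: "x \<in> Sn n" and j: "1 \<le> j" "j < n" and lt: "x (Suc j) < x j"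
  shows "len n x = Suc (len n (x \<circ> sref j))"
proof -
  have "len n ((x \<circ> sref j) \<circ> sref j) = Suc (len n (x \<circ> sref j))"
    by (rule len_rmult[OF Sn_rcomp[OF j x] j]) (simp add: sref_def lt)
  then show ?thesis by simp
qed

lemma len_id[simp]: "len n id = 0"
proof -
  have "invs n id = {}" by (auto simp: invs_def)
  then show ?thesis by (simp add: len_invs)
qed


lemma wprod_Nil[simp]: "wprod [] = id" by (simp add: wprod_def)
lemma Sn_id'[simp]: "(\<lambda>a. a) \<in> Sn n" using Sn_id by (simp add: id_def)
lemma len_id'[simp]: "len n (\<lambda>a. a) = 0" using len_id by (simp add: id_def)
lemma wprod_Cons[simp]: "wprod (i # xs) = sref i \<circ> wprod xs" by (simp add: wprod_def)
lemma wprod_append: "wprod (xs @ ys) = wprod xs \<circ> wprod ys"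
  by (induction xs) (simp_all add: o_assoc)

lemma wprod_Sn: "set xs \<subseteq> {1..<m} \<Longrightarrow> wprod xs \<in> Sn m"
proof (induction xs)
  case Nil then show ?case by (simp only: wprod_Nil Sn_id)
next
  case (Cons i xs)
  then have "1 \<le> i" "i < m" "wprod xs \<in> Sn m" by auto
  then show ?case unfolding wprod_Cons by (rule Sn_lcomp)
qed

definition lasc :: "perm \<Rightarrow> nat \<Rightarrow> bool" where
  "lasc x i \<longleftrightarrow> (\<exists>a b. x a = i \<and> x b = Suc i \<and> a < b)"

lemma Sn_inv: "x \<in> Sn n \<Longrightarrow> inv x \<in> Sn n"
  by (simp add: Sn_def permutes_inv)

lemma Sn_inv_app: "x \<in> Sn n \<Longrightarrow> x (inv x k) = k"
  unfolding Sn_def mem_Collect_eq by (rule permutes_inverses(1))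

lemma Sn_app_inv: "x \<in> Sn n \<Longrightarrow> inv x (x k) = k"
  unfolding Sn_def mem_Collect_eq by (rule permutes_inverses(2))

lemma len_lasc:
  assumes x: "x \<in> Sn n" and i: "1 \<le> i" "i < n" and a: "lasc x i"
  shows "len n (sref i \<circ> x) = Suc (len n x)"
  using a len_lmult[OF x i] unfolding lasc_def by blast

lemma len_not_lasc:
  assumes x: "x \<in> Sn n" and i: "1 \<le> i" "i < n" and a: "\<not> lasc x i"
  shows "len n x = Suc (len n (sref i \<circ> x))"
proof -
  define a b where "a = inv x (Suc i)" and "b = inv x i"
  have xa: "x a = Suc i" and xb: "x b = i" using Sn_inv_app[OF x] by (simp_all add: a_def b_def)
  have "a \<noteq> b" using xa xb by auto
  moreover have "\<not> b < a" using a xa xb unfolding lasc_def by blast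
  ultimately have "a < b" by simp
  then show ?thesis using len_lmult_down[OF x i xa xb] by simp
qed

lemma len_lmult_le: "x \<in> Sn n \<Longrightarrow> 1 \<le> i \<Longrightarrow> i < n \<Longrightarrow> len n (sref i \<circ> x) \<le> Suc (len n x)"
  using len_lasc[of x n i] len_not_lasc[of x n i] by (cases "lasc x i") auto

lemma len_rmult_cases:
  assumes x: "x \<in> Sn n" and j: "1 \<le> j" "j < n"
  shows "(x j < x (Suc j) \<and> len n (x \<circ> sref j) = Suc (len n x)) \<or>
         (x (Suc j) < x j \<and> len n x = Suc (len n (x \<circ> sref j)))"
proof (cases "x j < x (Suc j)")
  case True then show ?thesis using len_rmult[OF x j] by simp
next
  case False
  have "x j \<noteq> x (Suc j)" using Sn_inj[OF x, of j "Suc j"] by auto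
  with False have "x (Suc j) < x j" by simp
  then show ?thesis using len_rmult_down[OF x j] by simp
qed

lemma len_wprod_le: "set xs \<subseteq> {1..<n} \<Longrightarrow> len n (wprod xs) \<le> length xs"
proof (induction xs)
  case Nil then show ?case by (simp only: wprod_Nil len_id list.size(3) order_refl)
next
  case (Cons i xs)
  then have i: "1 \<le> i" "i < n" and s: "set xs \<subseteq> {1..<n}" by auto
  have "len n (sref i \<circ> wprod xs) \<le> Suc (len n (wprod xs))"
    by (rule len_lmult_le[OF wprod_Sn[OF s] i])
  then show ?case using Cons.IH[OF s] unfolding wprod_Cons length_Cons by linarith
qed

lemma reduced_tail:
  assumes "set (i # xs) \<subseteq> {1..<n}" "len n (wprod (i # xs)) = length (i # xs)"
  shows "len n (wprod xs) = length xs"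
proof -
  have i: "1 \<le> i" "i < n" and s: "set xs \<subseteq> {1..<n}" using assms(1) by auto
  have "len n (sref i \<circ> wprod xs) \<le> Suc (len n (wprod xs))"
    by (rule len_lmult_le[OF wprod_Sn[OF s] i])
  then show ?thesis using assms(2) len_wprod_le[OF s] unfolding wprod_Cons length_Cons by linarith
qed

lemma incr_id:
  assumes x: "x \<in> Sn m" and inc: "\<And>j. 1 \<le> j \<Longrightarrow> j < m \<Longrightarrow> x j < x (Suc j)"
  shows "x = id"
proof -
  have lo: "k \<le> x k" if "k \<in> {1..m}" for k
    using that
  proof (induction k)
    case 0 then show ?case by simp
  next
    case (Suc k)
    show ?case
    proof (cases "k = 0")
      case True then show ?thesis using Sn_range[OF x Suc.prems] by simp
    next
      case False
      then have "k \<in> {1..m}" using Suc.prems by auto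
      then have "k \<le> x k" by (rule Suc.IH)
      moreover have "x k < x (Suc k)" using inc[of k] False Suc.prems by auto
      ultimately show ?thesis by simp
    qed
  qed
  have hi: "x (m - d) \<le> m - d" if "d < m" for d
    using that
  proof (induction d)
    case 0 then show ?case using Sn_range[OF x, of m] by simp
  next
    case (Suc d)
    then have "x (m - d) \<le> m - d" by simp
    moreover have "x (m - Suc d) < x (Suc (m - Suc d))" using inc[of "m - Suc d"] Suc.prems by auto
    moreover have "Suc (m - Suc d) = m - d" using Suc.prems by simp
    ultimately show ?case by simp
  qed
  show ?thesis
  proof
    fix k
    show "x k = id k"
    proof (cases "k \<in> {1..m}")
      case True
      then have "x (m - (m - k)) \<le> m - (m - k)" using hi[of "m - k"] by auto
      then have "x k \<le> k" using True by simp
      then show ?thesis using lo[OF True] by simp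
    next
      case False then show ?thesis using Sn_out[OF x] by simp
    qed
  qed
qed

lemma decr_rev:
  assumes x: "x \<in> Sn m" and dec: "\<And>j. 1 \<le> j \<Longrightarrow> j < m \<Longrightarrow> x (Suc j) < x j"
    and k: "k \<in> {1..m}"
  shows "x k = m + 1 - k"
proof -
  have hi: "x k \<le> m + 1 - k" if "k \<in> {1..m}" for k
    using that
  proof (induction k)
    case 0 then show ?case by simp
  next
    case (Suc k)
    show ?case
    proof (cases "k = 0")
      case True then show ?thesis using Sn_range[OF x Suc.prems] by simp
    next
      case False
      then have "k \<in> {1..m}" using Suc.prems by auto
      then have "x k \<le> m + 1 - k" by (rule Suc.IH)
      moreover have "x (Suc k) < x k" using dec[of k] False Suc.prems by auto
      ultimately show ?thesis using Suc.prems by simp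
    qed
  qed
  have lo: "d + 1 \<le> x (m - d)" if "d < m" for d
    using that
  proof (induction d)
    case 0 then show ?case using Sn_range[OF x, of m] by simp
  next
    case (Suc d)
    then have "d + 1 \<le> x (m - d)" by simp
    moreover have "x (Suc (m - Suc d)) < x (m - Suc d)" using dec[of "m - Suc d"] Suc.prems by auto
    moreover have "Suc (m - Suc d) = m - d" using Suc.prems by simp
    ultimately show ?case by simp
  qed
  have "m - k + 1 \<le> x (m - (m - k))" using lo[of "m - k"] k by auto
  then show ?thesis using hi[OF k] k by simp
qed

definition revm :: "nat \<Rightarrow> perm" where
  "revm m k = (if k \<in> {1..m} then m + 1 - k else k)"

lemma revm_Sn: "revm m \<in> Sn m"
  unfolding Sn_def mem_Collect_eq
proof (rule inj_imp_permutes)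
  show "inj_on (revm m) {1..m}" by (rule inj_onI) (auto simp: revm_def)
qed (auto simp: revm_def)

lemma all_desc_rev:
  assumes u: "u \<in> Sn m" and d: "\<And>i. 1 \<le> i \<Longrightarrow> i < m \<Longrightarrow> \<not> lasc u i"
  shows "u = revm m"
proof -
  define q where "q = inv u"
  have q: "q \<in> Sn m" using Sn_inv[OF u] by (simp add: q_def)
  have dec: "q (Suc j) < q j" if "1 \<le> j" "j < m" for j
  proof -
    have "u (q j) = j" "u (q (Suc j)) = Suc j" using Sn_inv_app[OF u] by (simp_all add: q_def)
    moreover have "q j \<noteq> q (Suc j)" using Sn_inj[OF q, of j "Suc j"] by auto
    ultimately show ?thesis using d[OF that] unfolding lasc_def by force
  qed
  show ?thesis
  proof
    fix k
    show "u k = revm m k"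
    proof (cases "k \<in> {1..m}")
      case True
      define j where "j = m + 1 - k"
      have j: "j \<in> {1..m}" using True by (auto simp: j_def)
      have "q j = m + 1 - j" using decr_rev[OF q _ j] dec by blast
      then have "q j = k" using True by (simp add: j_def)
      then have "u k = j" using Sn_inv_app[OF u, of j] by (simp add: q_def)
      then show ?thesis using True by (simp add: revm_def j_def)
    next
      case False then show ?thesis using Sn_out[OF u False] False unfolding revm_def by auto
    qed
  qed
qed

lemma not_rev_asc:
  assumes "u \<in> Sn m" "u \<noteq> revm m"
  shows "\<exists>i. 1 \<le> i \<and> i < m \<and> lasc u i"
  using all_desc_rev[OF assms(1)] assms(2) by blast

lemma max_is_rev:
  assumes mn: "m \<le> n" and u: "u \<in> Sn m" and mx: "\<And>w. w \<in> Sn m \<Longrightarrow> len n w \<le> len n u"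
  shows "u = revm m"
proof (rule all_desc_rev[OF u])
  fix i assume i: "1 \<le> i" "i < m"
  show "\<not> lasc u i"
  proof
    assume a: "lasc u i"
    have "len n (sref i \<circ> u) = Suc (len n u)"
      by (rule len_lasc[OF Sn_mono[OF mn u] _ _ a]) (use i mn in auto)
    moreover have "len n (sref i \<circ> u) \<le> len n u" by (rule mx[OF Sn_lcomp[OF i u]])
    ultimately show False by simp
  qed
qed

lemma len_le_rev:
  assumes mn: "m \<le> n" and w: "w \<in> Sn m"
  shows "len n w \<le> len n (revm m)"
proof -
  define M where "M = Max (len n ` Sn m)"
  have fin: "finite (len n ` Sn m)" by simp
  have ne: "len n ` Sn m \<noteq> {}" using Sn_id[of m] by blast
  obtain u where u: "u \<in> Sn m" "len n u = M" using Max_in[OF fin ne] unfolding M_def by (metis imageE)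
  have ge: "len n v \<le> M" if "v \<in> Sn m" for v using Max_ge[OF fin] that unfolding M_def by blast
  have "u = revm m" by (rule max_is_rev[OF mn u(1)]) (use ge u in auto)
  then show ?thesis using ge[OF w] u by simp
qed

lemma len_eq_rev:
  assumes mn: "m \<le> n" and w: "w \<in> Sn m" and l: "len n w = len n (revm m)"
  shows "w = revm m"
  by (rule max_is_rev[OF mn w]) (use len_le_rev[OF mn] l in auto)

lemma rw_exists:
  assumes mn: "m \<le> n" and w: "w \<in> Sn m"
  shows "\<exists>xs. set xs \<subseteq> {1..<m} \<and> wprod xs = w \<and> length xs = len n w"
  using w
proof (induction "len n w" arbitrary: w rule: less_induct)
  case less
  show ?case
  proof (cases "\<forall>j. 1 \<le> j \<longrightarrow> j < m \<longrightarrow> w j < w (Suc j)")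
    case True
    then have "w = id" using incr_id[OF less.prems] by blast
    then show ?thesis by (intro exI[of _ "[]"]) simp
  next
    case False
    then obtain j where j: "1 \<le> j" "j < m" "\<not> w j < w (Suc j)" by blast
    have wn: "w \<in> Sn n" using Sn_mono[OF mn less.prems] .
    have jn: "j < n" using j mn by simp
    have "len n w = Suc (len n (w \<circ> sref j))"
      using len_rmult_cases[OF wn j(1) jn] j(3) by auto
    moreover have w': "w \<circ> sref j \<in> Sn m" by (rule Sn_rcomp[OF j(1,2) less.prems])
    ultimately obtain xs where xs: "set xs \<subseteq> {1..<m}" "wprod xs = w \<circ> sref j" "length xs = len n (w \<circ> sref j)"
      using less.hyps by force
    show ?thesis
      by (rule exI[of _ "xs @ [j]"]) (use xs j \<open>len n w = _\<close> in \<open>simp add: wprod_append o_assoc\<close>)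
  qed
qed

lemma rw_spec:
  assumes w: "w \<in> Sn n"
  shows "set (rw n w) \<subseteq> {1..<n}" "wprod (rw n w) = w" "length (rw n w) = len n w"
proof -
  have "\<exists>xs. set xs \<subseteq> {1..<n} \<and> wprod xs = w \<and> length xs = len n w"
    by (rule rw_exists[OF order_refl w])
  then have "set (rw n w) \<subseteq> {1..<n} \<and> wprod (rw n w) = w \<and> length (rw n w) = len n w"
    unfolding rw_def by (rule someI_ex)
  then show "set (rw n w) \<subseteq> {1..<n}" "wprod (rw n w) = w" "length (rw n w) = len n w" by auto
qed

lemma parab_Sn: "parab {1..<m} = Sn m"
proof
  show "parab {1..<m} \<subseteq> Sn m" unfolding parab_def using wprod_Sn by blast
  show "Sn m \<subseteq> parab {1..<m}"
  proof
    fix w assume "w \<in> Sn m"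
    then obtain xs where "set xs \<subseteq> {1..<m}" "wprod xs = w"
      using rw_exists[OF order_refl] by blast
    then show "w \<in> parab {1..<m}" unfolding parab_def by blast
  qed
qed

lemma longest_rev:
  assumes mn: "m \<le> n"
  shows "longest n {1..<m} = revm m"
  unfolding longest_def parab_Sn
proof (rule the_equality)
  show "revm m \<in> Sn m \<and> (\<forall>u\<in>Sn m. len n u \<le> len n (revm m))"
    using revm_Sn len_le_rev[OF mn] by blast
  fix w assume "w \<in> Sn m \<and> (\<forall>u\<in>Sn m. len n u \<le> len n w)"
  then show "w = revm m" using max_is_rev[OF mn] by blast
qed


definition hsup :: "nat \<Rightarrow> hecke \<Rightarrow> bool" where
  "hsup n h \<longleftrightarrow> (\<forall>x. x \<notin> Sn n \<longrightarrow> h x = 0)"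

abbreviation cc :: lpoly where "cc \<equiv> vinv - vv"

definition Bl :: "nat \<Rightarrow> nat \<Rightarrow> hecke \<Rightarrow> hecke" where
  "Bl n i h = hadd (Ls n i h) (hscale (vv - vinv) h)"

definition Rs :: "nat \<Rightarrow> nat \<Rightarrow> hecke \<Rightarrow> hecke" where
  "Rs n j h = (\<lambda>x. h (x \<circ> sref j) +
      (if len n (x \<circ> sref j) < len n x then (vinv - vv) * h x else 0))"

lemma Ls_apply: "Ls n i h x = h (sref i \<circ> x) + (if len n (sref i \<circ> x) < len n x then cc * h x else 0)"
  by (simp add: Ls_def)

lemma Bl_apply: "Bl n i h x = h (sref i \<circ> x) + (if len n (sref i \<circ> x) < len n x then cc * h x else 0) - cc * h x"
  by (simp add: Bl_def Ls_def hadd_def hscale_def algebra_simps)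

lemma Rs_apply: "Rs n j h x = h (x \<circ> sref j) + (if len n (x \<circ> sref j) < len n x then cc * h x else 0)"
  by (simp add: Rs_def)

lemma barT_Bl: "barT n w = foldr (Bl n) (rw n w) (hone n)"
  unfolding barT_def Bl_def[abs_def] ..

lemma supD: "hsup n h \<Longrightarrow> x \<notin> Sn n \<Longrightarrow> h x = 0" by (simp add: hsup_def)

lemma sup_Ls: assumes "hsup n h" "1 \<le> i" "i < n" shows "hsup n (Ls n i h)"
  unfolding hsup_def Ls_apply using assms Sn_lcomp_iff[OF assms(2,3)] by (simp add: hsup_def)

lemma sup_Bl: assumes "hsup n h" "1 \<le> i" "i < n" shows "hsup n (Bl n i h)"
  unfolding hsup_def Bl_apply using assms Sn_lcomp_iff[OF assms(2,3)] by (simp add: hsup_def)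

lemma sup_Rs: assumes "hsup n h" "1 \<le> j" "j < n" shows "hsup n (Rs n j h)"
  unfolding hsup_def Rs_apply using assms Sn_rcomp_iff[OF assms(2,3)] by (simp add: hsup_def)

lemma sup_foldr_Ls: "hsup n h \<Longrightarrow> set xs \<subseteq> {1..<n} \<Longrightarrow> hsup n (foldr (Ls n) xs h)"
  by (induction xs) (auto intro: sup_Ls)

lemma sup_foldr_Bl: "hsup n h \<Longrightarrow> set xs \<subseteq> {1..<n} \<Longrightarrow> hsup n (foldr (Bl n) xs h)"
  by (induction xs) (auto intro: sup_Bl)

lemma sup_foldr_Rs: "hsup n h \<Longrightarrow> set xs \<subseteq> {1..<n} \<Longrightarrow> hsup n (foldr (Rs n) xs h)"
  by (induction xs) (auto intro: sup_Rs)

lemma sup_tb: "hsup n (tb n u)" by (simp add: hsup_def tb_def)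

lemma tb_apply: "u \<in> Sn n \<Longrightarrow> tb n u x = (if x = u then 1 else 0)"
  by (simp add: tb_def)

lemma len_lcases:
  assumes "x \<in> Sn n" "1 \<le> i" "i < n"
  shows "len n (sref i \<circ> x) = Suc (len n x) \<or> len n x = Suc (len n (sref i \<circ> x))"
  using len_lasc[OF assms] len_not_lasc[OF assms] by blast

lemma Bl_Ls: assumes h: "hsup n h" and i: "1 \<le> i" "i < n" shows "Bl n i (Ls n i h) = h"
proof
  fix x
  show "Bl n i (Ls n i h) x = h x"
  proof (cases "x \<in> Sn n")
    case False
    then have "sref i \<circ> x \<notin> Sn n" using Sn_lcomp_iff[OF i] by simp
    then show ?thesis using False supD[OF h] unfolding Bl_apply Ls_apply by simp
  next
    case True
    have sy: "sref i \<circ> (sref i \<circ> x) = x" by simp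
    show ?thesis
    proof (cases "len n (sref i \<circ> x) < len n x")
      case c: True
      then have c2: "\<not> len n x < len n (sref i \<circ> x)" by simp
      show ?thesis unfolding Bl_apply Ls_apply sy if_P[OF c] if_not_P[OF c2] by (simp add: algebra_simps)
    next
      case c: False
      then have c2: "len n x < len n (sref i \<circ> x)" using len_lcases[OF True i] by auto
      show ?thesis unfolding Bl_apply Ls_apply sy if_not_P[OF c] if_P[OF c2] by (simp add: algebra_simps)
    qed
  qed
qed

lemma Ls_Bl: assumes h: "hsup n h" and i: "1 \<le> i" "i < n" shows "Ls n i (Bl n i h) = h"
proof
  fix x
  show "Ls n i (Bl n i h) x = h x"
  proof (cases "x \<in> Sn n")
    case False
    then have "sref i \<circ> x \<notin> Sn n" using Sn_lcomp_iff[OF i] by simp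
    then show ?thesis using False supD[OF h] unfolding Bl_apply Ls_apply by simp
  next
    case True
    have sy: "sref i \<circ> (sref i \<circ> x) = x" by simp
    show ?thesis
    proof (cases "len n (sref i \<circ> x) < len n x")
      case c: True
      then have c2: "\<not> len n x < len n (sref i \<circ> x)" by simp
      show ?thesis unfolding Bl_apply Ls_apply sy if_P[OF c] if_not_P[OF c2] by (simp add: algebra_simps)
    next
      case c: False
      then have c2: "len n x < len n (sref i \<circ> x)" using len_lcases[OF True i] by auto
      show ?thesis unfolding Bl_apply Ls_apply sy if_not_P[OF c] if_P[OF c2] by (simp add: algebra_simps)
    qed
  qed
qed

lemma Bl_Bl: assumes h: "hsup n h" and i: "1 \<le> i" "i < n"
  shows "Bl n i (Bl n i h) = (\<lambda>x. h x - cc * Bl n i h x)"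
proof
  fix x
  show "Bl n i (Bl n i h) x = h x - cc * Bl n i h x"
  proof (cases "x \<in> Sn n")
    case False
    then have "sref i \<circ> x \<notin> Sn n" using Sn_lcomp_iff[OF i] by simp
    then show ?thesis using False supD[OF h] unfolding Bl_apply by simp
  next
    case True
    have sy: "sref i \<circ> (sref i \<circ> x) = x" by simp
    show ?thesis
    proof (cases "len n (sref i \<circ> x) < len n x")
      case c: True
      then have c2: "\<not> len n x < len n (sref i \<circ> x)" by simp
      show ?thesis unfolding Bl_apply sy if_P[OF c] if_not_P[OF c2] by (simp add: algebra_simps)
    next
      case c: False
      then have c2: "len n x < len n (sref i \<circ> x)" using len_lcases[OF True i] by auto
      show ?thesis unfolding Bl_apply sy if_not_P[OF c] if_P[OF c2] by (simp add: algebra_simps)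
    qed
  qed
qed

lemma lasc_iff: "x \<in> Sn n \<Longrightarrow> lasc x i \<longleftrightarrow> inv x i < inv x (Suc i)"
  unfolding lasc_def using Sn_inv_app[of x n] Sn_app_inv[of x n] by metis

lemma lless_iff:
  assumes "x \<in> Sn n" "1 \<le> i" "i < n"
  shows "len n (sref i \<circ> x) < len n x \<longleftrightarrow> \<not> lasc x i"
  using len_lasc[OF assms] len_not_lasc[OF assms] by (cases "lasc x i") auto

lemma rless_iff:
  assumes "x \<in> Sn n" "1 \<le> j" "j < n"
  shows "len n (x \<circ> sref j) < len n x \<longleftrightarrow> x (Suc j) < x j"
  using len_rmult_cases[OF assms] by auto

lemma swap_eq:
  assumes x: "x \<in> Sn n" and c: "(x j = i \<and> x (Suc j) = Suc i) \<or> (x j = Suc i \<and> x (Suc j) = i)"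
  shows "sref i \<circ> x = x \<circ> sref j"
proof
  fix k
  show "(sref i \<circ> x) k = (x \<circ> sref j) k"
  proof (cases "k = j \<or> k = Suc j")
    case True then show ?thesis using c by (auto simp: sref_def)
  next
    case False
    then have "x k \<noteq> x j" "x k \<noteq> x (Suc j)" using Sn_inj[OF x] by metis+
    then have "x k \<noteq> i" "x k \<noteq> Suc i" using c by auto
    then show ?thesis using False by (simp add: sref_def)
  qed
qed

lemma inv_rcomp: "x \<in> Sn n \<Longrightarrow> 1 \<le> j \<Longrightarrow> j < n \<Longrightarrow> inv (x \<circ> sref j) = sref j \<circ> inv x"
proof -
  assume x: "x \<in> Sn n" and j: "1 \<le> j" "j < n"
  have bx: "bij x" using x unfolding Sn_def by (simp add: permutes_bij)
  have bs: "bij (sref j)" by (simp add: sref_def)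
  have "inv (x \<circ> sref j) = inv (sref j) \<circ> inv x" by (rule o_inv_distrib[OF bx bs])
  then show ?thesis by (simp add: sref_def)
qed

lemma condA:
  assumes x: "x \<in> Sn n" and i: "1 \<le> i" "i < n" and j: "1 \<le> j" "j < n"
    and ne: "sref i \<circ> x \<noteq> x \<circ> sref j"
  shows "len n (sref i \<circ> x \<circ> sref j) < len n (sref i \<circ> x) \<longleftrightarrow> len n (x \<circ> sref j) < len n x"
proof -
  have sx: "sref i \<circ> x \<in> Sn n" by (rule Sn_lcomp[OF i x])
  have "len n (sref i \<circ> x \<circ> sref j) < len n (sref i \<circ> x) \<longleftrightarrow> sref i (x (Suc j)) < sref i (x j)"
    using rless_iff[OF sx j] by simp
  also have "\<dots> \<longleftrightarrow> x (Suc j) < x j"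
  proof (rule sref_order)
    show "x (Suc j) \<noteq> x j" using Sn_inj[OF x, of "Suc j" j] by auto
    show "\<not> (x (Suc j) = i \<and> x j = Suc i)" using swap_eq[OF x] ne by blast
    show "\<not> (x (Suc j) = Suc i \<and> x j = i)" using swap_eq[OF x] ne by blast
  qed
  also have "\<dots> \<longleftrightarrow> len n (x \<circ> sref j) < len n x" using rless_iff[OF x j] by simp
  finally show ?thesis .
qed

lemma condB:
  assumes x: "x \<in> Sn n" and i: "1 \<le> i" "i < n" and j: "1 \<le> j" "j < n"
    and ne: "sref i \<circ> x \<noteq> x \<circ> sref j"
  shows "len n (sref i \<circ> (x \<circ> sref j)) < len n (x \<circ> sref j) \<longleftrightarrow> len n (sref i \<circ> x) < len n x"
proof -
  have xt: "x \<circ> sref j \<in> Sn n" by (rule Sn_rcomp[OF j x])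
  have ix: "inv x \<in> Sn n" by (rule Sn_inv[OF x])
  have ne2: "sref j (inv x (Suc i)) \<noteq> sref j (inv x i)"
    using Sn_inj[OF ix, of "Suc i" i] by (auto simp: sref_def dest: transpose_eq_imp_eq)
  have "len n (sref i \<circ> (x \<circ> sref j)) < len n (x \<circ> sref j) \<longleftrightarrow>
        sref j (inv x (Suc i)) < sref j (inv x i)"
    using lless_iff[OF xt i] lasc_iff[OF xt] inv_rcomp[OF x j] ne2 by auto
  also have "\<dots> \<longleftrightarrow> inv x (Suc i) < inv x i"
  proof (rule sref_order)
    have ix: "inv x \<in> Sn n" by (rule Sn_inv[OF x])
    show "inv x (Suc i) \<noteq> inv x i" using Sn_inj[OF ix, of "Suc i" i] by auto
    show "\<not> (inv x (Suc i) = j \<and> inv x i = Suc j)"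
    proof
      assume "inv x (Suc i) = j \<and> inv x i = Suc j"
      then have "x j = Suc i \<and> x (Suc j) = i" using Sn_inv_app[OF x] by metis
      then show False using swap_eq[OF x] ne by blast
    qed
    show "\<not> (inv x (Suc i) = Suc j \<and> inv x i = j)"
    proof
      assume "inv x (Suc i) = Suc j \<and> inv x i = j"
      then have "x j = i \<and> x (Suc j) = Suc i" using Sn_inv_app[OF x] by metis
      then show False using swap_eq[OF x] ne by blast
    qed
  qed
  also have "\<dots> \<longleftrightarrow> len n (sref i \<circ> x) < len n x"
  proof -
    have "inv x (Suc i) \<noteq> inv x i" using Sn_inj[OF ix, of "Suc i" i] by auto
    then show ?thesis using lless_iff[OF x i] lasc_iff[OF x] by auto
  qed
  finally show ?thesis .
qed

lemma Ls_Rs: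
  assumes h: "hsup n h" and i: "1 \<le> i" "i < n" and j: "1 \<le> j" "j < n"
  shows "Ls n i (Rs n j h) = Rs n j (Ls n i h)"
proof
  fix x
  show "Ls n i (Rs n j h) x = Rs n j (Ls n i h) x"
  proof (cases "x \<in> Sn n")
    case False
    then have "sref i \<circ> x \<notin> Sn n" "x \<circ> sref j \<notin> Sn n" "sref i \<circ> x \<circ> sref j \<notin> Sn n"
      "sref i \<circ> (x \<circ> sref j) \<notin> Sn n"
      using Sn_lcomp_iff[OF i] Sn_rcomp_iff[OF j] by (simp_all add: o_assoc)
    then show ?thesis using False supD[OF h] unfolding Ls_apply Rs_apply by simp
  next
    case True
    show ?thesis
    proof (cases "sref i \<circ> x = x \<circ> sref j")
      case eq: True
      have e2: "sref i \<circ> x \<circ> sref j = x" by (simp only: eq comp_sref_sref)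
      have e3: "sref i \<circ> (x \<circ> sref j) = x" using e2 by (simp add: o_assoc)
      show ?thesis unfolding Ls_apply Rs_apply e2 e3 eq by simp
    next
      case ne: False
      have A: "len n (sref i \<circ> x \<circ> sref j) < len n (sref i \<circ> x) \<longleftrightarrow> len n (x \<circ> sref j) < len n x"
        by (rule condA[OF True i j ne])
      have B: "len n (sref i \<circ> (x \<circ> sref j)) < len n (x \<circ> sref j) \<longleftrightarrow> len n (sref i \<circ> x) < len n x"
        by (rule condB[OF True i j ne])
      have C: "sref i \<circ> (x \<circ> sref j) = sref i \<circ> x \<circ> sref j" by (simp add: o_assoc)
      have B': "len n (sref i \<circ> x \<circ> sref j) < len n (x \<circ> sref j) \<longleftrightarrow> len n (sref i \<circ> x) < len n x"
        using B unfolding C .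
      show ?thesis unfolding Ls_apply Rs_apply C A B' by (simp add: algebra_simps)
    qed
  qed
qed

lemma foldr_Ls_Rs:
  assumes h: "hsup n h" and xs: "set xs \<subseteq> {1..<n}" and j: "1 \<le> j" "j < n"
  shows "foldr (Ls n) xs (Rs n j h) = Rs n j (foldr (Ls n) xs h)"
  using xs
proof (induction xs)
  case Nil then show ?case by simp
next
  case (Cons i xs)
  then have i: "1 \<le> i" "i < n" and s: "set xs \<subseteq> {1..<n}" by auto
  have "foldr (Ls n) (i # xs) (Rs n j h) = Ls n i (Rs n j (foldr (Ls n) xs h))"
    using Cons.IH[OF s] by simp
  also have "\<dots> = Rs n j (Ls n i (foldr (Ls n) xs h))"
    by (rule Ls_Rs[OF sup_foldr_Ls[OF h s] i j])
  finally show ?case by simp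
qed

lemma foldr_Ls_foldr_Rs:
  assumes h: "hsup n h" and xs: "set xs \<subseteq> {1..<n}" and js: "set js \<subseteq> {1..<n}"
  shows "foldr (Ls n) xs (foldr (Rs n) js h) = foldr (Rs n) js (foldr (Ls n) xs h)"
  using js
proof (induction js)
  case Nil then show ?case by simp
next
  case (Cons j js)
  then have j: "1 \<le> j" "j < n" and s: "set js \<subseteq> {1..<n}" by auto
  have "foldr (Ls n) xs (foldr (Rs n) (j # js) h) = foldr (Ls n) xs (Rs n j (foldr (Rs n) js h))" by simp
  also have "\<dots> = Rs n j (foldr (Ls n) xs (foldr (Rs n) js h))"
    by (rule foldr_Ls_Rs[OF sup_foldr_Rs[OF h s] xs j])
  also have "\<dots> = Rs n j (foldr (Rs n) js (foldr (Ls n) xs h))" using Cons.IH[OF s] by simp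
  finally show ?case by simp
qed

lemma Ls_lin: "Ls n i (\<lambda>x. \<Sum>u\<in>A. a u * f u x) = (\<lambda>x. \<Sum>u\<in>A. a u * Ls n i (f u) x)"
  by (rule ext) (simp add: Ls_apply sum.distrib sum_distrib_left algebra_simps)

lemma foldr_Ls_lin:
  "foldr (Ls n) xs (\<lambda>x. \<Sum>u\<in>A. a u * f u x) = (\<lambda>x. \<Sum>u\<in>A. a u * foldr (Ls n) xs (f u) x)"
proof (induction xs)
  case Nil then show ?case by simp
next
  case (Cons i xs)
  show ?case by (simp add: Cons.IH Ls_lin)
qed

lemma Bl_lin: "Bl n i (\<lambda>x. \<Sum>u\<in>A. a u * f u x) = (\<lambda>x. \<Sum>u\<in>A. a u * Bl n i (f u) x)"
  by (rule ext) (simp add: Bl_apply sum.distrib sum_distrib_left algebra_simps sum_subtractf)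

lemma sup_expand: "hsup n g \<Longrightarrow> g = (\<lambda>x. \<Sum>u\<in>Sn n. g u * tb n u x)"
proof
  fix x assume g: "hsup n g"
  show "g x = (\<Sum>u\<in>Sn n. g u * tb n u x)"
  proof (cases "x \<in> Sn n")
    case True
    have "(\<Sum>u\<in>Sn n. g u * tb n u x) = (\<Sum>u\<in>Sn n. if u = x then g x else 0)"
      by (rule sum.cong) (auto simp: tb_def)
    also have "\<dots> = g x" using True by simp
    finally show ?thesis by simp
  next
    case False
    have "(\<Sum>u\<in>Sn n. g u * tb n u x) = 0"
      by (rule sum.neutral) (use False in \<open>auto simp: tb_def\<close>)
    then show ?thesis using False supD[OF g] by simp
  qed
qed


definition reduced :: "nat \<Rightarrow> nat list \<Rightarrow> bool" where
  "reduced n xs \<longleftrightarrow> set xs \<subseteq> {1..<n} \<and> len n (wprod xs) = length xs"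

lemma reduced_Cons: "reduced n (i # xs) \<Longrightarrow> reduced n xs"
  unfolding reduced_def using reduced_tail by auto

lemma Ls_tb:
  assumes y: "y \<in> Sn n" and i: "1 \<le> i" "i < n" and l: "len n (sref i \<circ> y) = Suc (len n y)"
  shows "Ls n i (tb n y) = tb n (sref i \<circ> y)"
proof
  fix x
  have sy: "sref i \<circ> y \<in> Sn n" by (rule Sn_lcomp[OF i y])
  have e: "sref i \<circ> x = y \<longleftrightarrow> x = sref i \<circ> y" by auto
  show "Ls n i (tb n y) x = tb n (sref i \<circ> y) x"
  proof (cases "x = y")
    case True
    then show ?thesis using l y sy by (auto simp: Ls_apply tb_def)
  next
    case False
    then show ?thesis using y sy e by (auto simp: Ls_apply tb_def)
  qed
qed

lemma Rs_tb:
  assumes y: "y \<in> Sn n" and j: "1 \<le> j" "j < n" and l: "len n (y \<circ> sref j) = Suc (len n y)"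
  shows "Rs n j (tb n y) = tb n (y \<circ> sref j)"
proof
  fix x
  have sy: "y \<circ> sref j \<in> Sn n" by (rule Sn_rcomp[OF j y])
  have e: "x \<circ> sref j = y \<longleftrightarrow> x = y \<circ> sref j" by auto
  show "Rs n j (tb n y) x = tb n (y \<circ> sref j) x"
  proof (cases "x = y")
    case True
    then show ?thesis using l y sy by (auto simp: Rs_apply tb_def)
  next
    case False
    then show ?thesis using y sy e by (auto simp: Rs_apply tb_def)
  qed
qed

lemma foldr_Ls_tb: "reduced n xs \<Longrightarrow> foldr (Ls n) xs (tb n id) = tb n (wprod xs)"
proof (induction xs)
  case Nil then show ?case by simp
next
  case (Cons i xs)
  have r: "reduced n xs" by (rule reduced_Cons[OF Cons.prems])
  have i: "1 \<le> i" "i < n" using Cons.prems by (auto simp: reduced_def)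
  have s: "set xs \<subseteq> {1..<n}" using r by (simp add: reduced_def)
  have l: "len n (sref i \<circ> wprod xs) = Suc (len n (wprod xs))"
    using Cons.prems r unfolding reduced_def by simp
  have "foldr (Ls n) (i # xs) (tb n id) = Ls n i (foldr (Ls n) xs (tb n id))" by simp
  also have "\<dots> = Ls n i (tb n (wprod xs))" by (simp only: Cons.IH[OF r])
  also have "\<dots> = tb n (sref i \<circ> wprod xs)" by (rule Ls_tb[OF wprod_Sn[OF s] i l])
  finally show ?case by (simp only: wprod_Cons)
qed

lemma tb_Rs_decomp:
  assumes u: "u \<in> Sn n"
  shows "\<exists>js. set js \<subseteq> {1..<n} \<and> tb n u = foldr (Rs n) js (tb n id)"
  using u
proof (induction "len n u" arbitrary: u rule: less_induct)
  case less
  show ?case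
  proof (cases "\<forall>j. 1 \<le> j \<longrightarrow> j < n \<longrightarrow> u j < u (Suc j)")
    case True
    then have "u = id" using incr_id[OF less.prems] by blast
    then show ?thesis by (intro exI[of _ "[]"]) simp
  next
    case False
    then obtain j where j: "1 \<le> j" "j < n" "\<not> u j < u (Suc j)" by blast
    have lu: "len n u = Suc (len n (u \<circ> sref j))"
      using len_rmult_cases[OF less.prems j(1,2)] j(3) by auto
    have y: "u \<circ> sref j \<in> Sn n" by (rule Sn_rcomp[OF j(1,2) less.prems])
    obtain js where js: "set js \<subseteq> {1..<n}" "tb n (u \<circ> sref j) = foldr (Rs n) js (tb n id)"
      using less.hyps[OF _ y] lu by force
    have "Rs n j (tb n (u \<circ> sref j)) = tb n (u \<circ> sref j \<circ> sref j)"
      by (rule Rs_tb[OF y j(1,2)]) (simp add: lu)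
    then have "tb n u = foldr (Rs n) (j # js) (tb n id)" using js by simp
    then show ?thesis using js j by (intro exI[of _ "j # js"]) simp
  qed
qed

lemma L_indep:
  assumes xs: "reduced n xs" and ys: "reduced n ys" and w: "wprod xs = wprod ys" and g: "hsup n g"
  shows "foldr (Ls n) xs g = foldr (Ls n) ys g"
proof -
  have sx: "set xs \<subseteq> {1..<n}" and sy: "set ys \<subseteq> {1..<n}" using xs ys by (auto simp: reduced_def)
  have d: "foldr (Ls n) xs (tb n u) = foldr (Ls n) ys (tb n u)" if u: "u \<in> Sn n" for u
  proof -
    obtain js where js: "set js \<subseteq> {1..<n}" "tb n u = foldr (Rs n) js (tb n id)"
      using tb_Rs_decomp[OF u] by blast
    have "foldr (Ls n) xs (tb n u) = foldr (Rs n) js (foldr (Ls n) xs (tb n id))"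
      unfolding js(2) by (rule foldr_Ls_foldr_Rs[OF sup_tb sx js(1)])
    also have "\<dots> = foldr (Rs n) js (foldr (Ls n) ys (tb n id))"
      using foldr_Ls_tb[OF xs] foldr_Ls_tb[OF ys] w by simp
    also have "\<dots> = foldr (Ls n) ys (tb n u)"
      unfolding js(2) by (rule foldr_Ls_foldr_Rs[OF sup_tb sy js(1), symmetric])
    finally show ?thesis .
  qed
  have "foldr (Ls n) xs g = foldr (Ls n) xs (\<lambda>x. \<Sum>u\<in>Sn n. g u * tb n u x)"
    using sup_expand[OF g] by simp
  also have "\<dots> = (\<lambda>x. \<Sum>u\<in>Sn n. g u * foldr (Ls n) xs (tb n u) x)" by (rule foldr_Ls_lin)
  also have "\<dots> = (\<lambda>x. \<Sum>u\<in>Sn n. g u * foldr (Ls n) ys (tb n u) x)" using d by simp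
  also have "\<dots> = foldr (Ls n) ys (\<lambda>x. \<Sum>u\<in>Sn n. g u * tb n u x)" by (rule foldr_Ls_lin[symmetric])
  also have "\<dots> = foldr (Ls n) ys g" using sup_expand[OF g] by simp
  finally show ?thesis .
qed

lemma len_inv_le:
  assumes x: "x \<in> Sn n"
  shows "len n (inv x) \<le> len n x"
proof -
  define f where "f = (\<lambda>pq. (inv x (snd pq), inv x (fst pq)))"
  have ix: "inv x \<in> Sn n" by (rule Sn_inv[OF x])
  have "inj_on f (invs n (inv x))"
  proof (rule inj_onI)
    fix a b assume "a \<in> invs n (inv x)" "b \<in> invs n (inv x)" "f a = f b"
    then have "inv x (snd a) = inv x (snd b)" "inv x (fst a) = inv x (fst b)" by (auto simp: f_def)
    then have "snd a = snd b" "fst a = fst b" using Sn_inj[OF ix] by blast+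
    then show "a = b" by (simp add: prod_eq_iff)
  qed
  moreover have "f ` invs n (inv x) \<subseteq> invs n x"
  proof
    fix r assume "r \<in> f ` invs n (inv x)"
    then obtain p q where pq: "(p,q) \<in> invs n (inv x)" "r = (inv x q, inv x p)" by (auto simp: f_def)
    then have "p \<in> {1..n}" "q \<in> {1..n}" "p < q" "inv x q < inv x p" unfolding mem_invs by auto
    moreover have "x (inv x q) = q" "x (inv x p) = p" using Sn_inv_app[OF x] by auto
    ultimately show "r \<in> invs n x" unfolding pq(2) mem_invs using Sn_range[OF ix] by auto
  qed
  ultimately have "card (invs n (inv x)) \<le> card (invs n x)" by (intro card_inj_on_le) auto
  then show ?thesis by (simp add: len_invs)
qed

lemma len_inv:
  assumes x: "x \<in> Sn n"
  shows "len n (inv x) = len n x"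
proof -
  have "inv (inv x) = x" using x unfolding Sn_def by (simp add: permutes_inv_inv)
  then have "len n x \<le> len n (inv x)" using len_inv_le[OF Sn_inv[OF x]] by simp
  then show ?thesis using len_inv_le[OF x] by simp
qed

lemma wprod_rev_l: "wprod (rev xs) \<circ> wprod xs = id"
proof (induction xs)
  case Nil then show ?case by simp
next
  case (Cons i xs)
  have "wprod (rev (i # xs)) \<circ> wprod (i # xs) = wprod (rev xs) \<circ> (sref i \<circ> (sref i \<circ> wprod xs))"
    by (simp add: wprod_append o_assoc)
  also have "\<dots> = id" using Cons.IH by (simp only: sref_sref_comp)
  finally show ?case .
qed

lemma wprod_rev_r: "wprod xs \<circ> wprod (rev xs) = id"
  using wprod_rev_l[of "rev xs"] by simp

lemma wprod_rev: "wprod (rev xs) = inv (wprod xs)"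
  by (rule inv_unique_comp[OF wprod_rev_r wprod_rev_l, symmetric])

lemma reduced_rev: assumes "reduced n xs" shows "reduced n (rev xs)"
proof -
  have s: "set xs \<subseteq> {1..<n}" and l: "len n (wprod xs) = length xs" using assms by (auto simp: reduced_def)
  have "len n (wprod (rev xs)) = len n (wprod xs)"
    unfolding wprod_rev by (rule len_inv[OF wprod_Sn[OF s]])
  then show ?thesis using s l by (simp add: reduced_def)
qed

lemma foldr_Bl_Ls: "hsup n g \<Longrightarrow> set xs \<subseteq> {1..<n} \<Longrightarrow> foldr (Bl n) xs (foldr (Ls n) (rev xs) g) = g"
proof (induction xs arbitrary: g)
  case Nil then show ?case by simp
next
  case (Cons i xs)
  then have i: "1 \<le> i" "i < n" and s: "set xs \<subseteq> {1..<n}" by auto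
  have "foldr (Bl n) (i # xs) (foldr (Ls n) (rev (i # xs)) g) =
        Bl n i (foldr (Bl n) xs (foldr (Ls n) (rev xs) (Ls n i g)))" by simp
  also have "\<dots> = Bl n i (Ls n i g)" using Cons.IH[OF sup_Ls[OF Cons.prems(1) i] s] by simp
  also have "\<dots> = g" by (rule Bl_Ls[OF Cons.prems(1) i])
  finally show ?case .
qed

lemma foldr_Ls_Bl: "hsup n g \<Longrightarrow> set xs \<subseteq> {1..<n} \<Longrightarrow> foldr (Ls n) (rev xs) (foldr (Bl n) xs g) = g"
proof (induction xs arbitrary: g)
  case Nil then show ?case by simp
next
  case (Cons i xs)
  then have i: "1 \<le> i" "i < n" and s: "set xs \<subseteq> {1..<n}" by auto
  have sb: "hsup n (foldr (Bl n) xs g)" by (rule sup_foldr_Bl[OF Cons.prems(1) s])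
  have "foldr (Ls n) (rev (i # xs)) (foldr (Bl n) (i # xs) g) =
        foldr (Ls n) (rev xs) (Ls n i (Bl n i (foldr (Bl n) xs g)))" by simp
  also have "\<dots> = foldr (Ls n) (rev xs) (foldr (Bl n) xs g)" by (simp only: Ls_Bl[OF sb i])
  also have "\<dots> = g" by (rule Cons.IH[OF Cons.prems(1) s])
  finally show ?case .
qed

lemma B_indep:
  assumes xs: "reduced n xs" and ys: "reduced n ys" and w: "wprod xs = wprod ys" and g: "hsup n g"
  shows "foldr (Bl n) xs g = foldr (Bl n) ys g"
proof -
  have sx: "set xs \<subseteq> {1..<n}" and sy: "set ys \<subseteq> {1..<n}" using xs ys by (auto simp: reduced_def)
  define f where "f = foldr (Bl n) xs g"
  have sf: "hsup n f" unfolding f_def by (rule sup_foldr_Bl[OF g sx])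
  have "foldr (Ls n) (rev ys) f = foldr (Ls n) (rev xs) f"
    by (rule L_indep[OF reduced_rev[OF ys] reduced_rev[OF xs] _ sf]) (simp add: wprod_rev w)
  also have "\<dots> = g" unfolding f_def by (rule foldr_Ls_Bl[OF g sx])
  finally have e: "foldr (Ls n) (rev ys) f = g" .
  have "foldr (Bl n) ys g = foldr (Bl n) ys (foldr (Ls n) (rev ys) f)" using e by simp
  also have "\<dots> = f" by (rule foldr_Bl_Ls[OF sf sy])
  finally show ?thesis unfolding f_def by simp
qed

lemma barT_word:
  assumes xs: "reduced n xs"
  shows "barT n (wprod xs) = foldr (Bl n) xs (hone n)"
proof -
  have s: "set xs \<subseteq> {1..<n}" using xs by (simp add: reduced_def)
  have w: "wprod xs \<in> Sn n" by (rule wprod_Sn[OF s])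
  have r: "reduced n (rw n (wprod xs))" using rw_spec[OF w] by (simp add: reduced_def)
  show ?thesis unfolding barT_Bl hone_def
    by (rule B_indep[OF r xs _ sup_tb]) (simp add: rw_spec[OF w])
qed


lemma barT_rw: "w \<in> Sn n \<Longrightarrow> barT n w = foldr (Bl n) (rw n w) (tb n id)"
  by (simp add: barT_Bl hone_def)

lemma reduced_rw: "w \<in> Sn n \<Longrightarrow> reduced n (rw n w)"
  using rw_spec[of w n] by (simp add: reduced_def)

lemma barT_sup: "w \<in> Sn n \<Longrightarrow> hsup n (barT n w)"
  unfolding barT_rw by (rule sup_foldr_Bl[OF sup_tb rw_spec(1)])

lemma T1: "set xs \<subseteq> {1..<n} \<Longrightarrow> foldr (Bl n) xs (tb n id) x \<noteq> 0 \<Longrightarrow> len n x \<le> length xs"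
proof (induction xs arbitrary: x)
  case Nil
  then have "x = id" by (simp add: tb_def id_def split: if_splits)
  then show ?case by (simp only: len_id)
next
  case (Cons i xs)
  then have i: "1 \<le> i" "i < n" and s: "set xs \<subseteq> {1..<n}" by auto
  define g where "g = foldr (Bl n) xs (tb n id)"
  have sg: "hsup n g" unfolding g_def by (rule sup_foldr_Bl[OF sup_tb s])
  have ne: "Bl n i g x \<noteq> 0" using Cons.prems(2) unfolding g_def by (simp only: foldr.simps o_apply simp_thms)
  show ?case
  proof (cases "x \<in> Sn n")
    case False
    then have "sref i \<circ> x \<notin> Sn n" using Sn_lcomp_iff[OF i] by simp
    then have "Bl n i g x = 0" using False supD[OF sg] by (simp add: Bl_apply)
    with ne show ?thesis by simp
  next
    case True
    have "g (sref i \<circ> x) \<noteq> 0 \<or> g x \<noteq> 0"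
    proof (rule ccontr)
      assume "\<not> (g (sref i \<circ> x) \<noteq> 0 \<or> g x \<noteq> 0)"
      then have "Bl n i g x = 0" by (simp add: Bl_apply)
      with ne show False by simp
    qed
    then show ?thesis
    proof
      assume "g (sref i \<circ> x) \<noteq> 0"
      then have "len n (sref i \<circ> x) \<le> length xs" using Cons.IH[OF s, of "sref i \<circ> x"] unfolding g_def by blast
      then show ?thesis using len_lcases[OF True i] by auto
    next
      assume "g x \<noteq> 0"
      then have "len n x \<le> length xs" using Cons.IH[OF s, of x] unfolding g_def by blast
      then show ?thesis by simp
    qed
  qed
qed

lemma T2: "reduced n xs \<Longrightarrow> len n x = length xs \<Longrightarrow> foldr (Bl n) xs (tb n id) x = tb n (wprod xs) x"
proof (induction xs arbitrary: x)
  case Nil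
  show ?case by simp
next
  case (Cons i xs)
  have r: "reduced n xs" by (rule reduced_Cons[OF Cons.prems(1)])
  have i: "1 \<le> i" "i < n" and s: "set xs \<subseteq> {1..<n}" using Cons.prems(1) r by (auto simp: reduced_def)
  have lw: "len n (wprod xs) = length xs" using r by (simp add: reduced_def)
  have ws: "wprod xs \<in> Sn n" by (rule wprod_Sn[OF s])
  have sws: "sref i \<circ> wprod xs \<in> Sn n" by (rule Sn_lcomp[OF i ws])
  define g where "g = foldr (Bl n) xs (tb n id)"
  have sg: "hsup n g" unfolding g_def by (rule sup_foldr_Bl[OF sup_tb s])
  have gx: "g x = 0"
  proof (rule ccontr)
    assume "g x \<noteq> 0"
    then have "len n x \<le> length xs" using T1[OF s, of x] unfolding g_def by blast
    then show False using Cons.prems(2) by simp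
  qed
  have lhs: "foldr (Bl n) (i # xs) (tb n id) x = Bl n i g x" by (simp add: g_def)
  show ?case
  proof (cases "x \<in> Sn n")
    case False
    then have "sref i \<circ> x \<notin> Sn n" using Sn_lcomp_iff[OF i] by simp
    then have "Bl n i g x = 0" using False supD[OF sg] by (simp add: Bl_apply)
    moreover have "x \<noteq> sref i \<circ> wprod xs" using False sws by auto
    ultimately show ?thesis unfolding lhs wprod_Cons tb_apply[OF sws] by (simp only: if_False)
  next
    case True
    have bl: "Bl n i g x = g (sref i \<circ> x)" using gx by (simp add: Bl_apply)
    have ex: "x = sref i \<circ> wprod xs \<longleftrightarrow> sref i \<circ> x = wprod xs" by (metis sref_sref_comp)
    show ?thesis
    proof (cases "len n (sref i \<circ> x) = length xs")
      case True
      have "g (sref i \<circ> x) = tb n (wprod xs) (sref i \<circ> x)"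
        unfolding g_def by (rule Cons.IH[OF r True])
      then show ?thesis unfolding lhs bl wprod_Cons tb_apply[OF ws] tb_apply[OF sws] ex .
    next
      case False
      then have l2: "len n (sref i \<circ> x) = Suc (Suc (length xs))"
        using len_lcases[OF \<open>x \<in> Sn n\<close> i] Cons.prems(2) by auto
      have "g (sref i \<circ> x) = 0"
      proof (rule ccontr)
        assume "g (sref i \<circ> x) \<noteq> 0"
        then have "len n (sref i \<circ> x) \<le> length xs" using T1[OF s, of "sref i \<circ> x"] unfolding g_def by blast
        then show False using l2 by simp
      qed
      moreover have "sref i \<circ> x \<noteq> wprod xs" using l2 lw by auto
      ultimately show ?thesis unfolding lhs bl wprod_Cons tb_apply[OF sws] ex by (simp only: if_False)
    qed
  qed
qed

lemma barT_tri:
  assumes w: "w \<in> Sn n" and ne: "barT n w x \<noteq> 0"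
  shows "x \<in> Sn n \<and> (len n x < len n w \<or> x = w)"
proof -
  have r: "reduced n (rw n w)" by (rule reduced_rw[OF w])
  have x: "x \<in> Sn n" using ne supD[OF barT_sup[OF w]] by blast
  have le: "len n x \<le> len n w" using T1[OF rw_spec(1)[OF w]] ne rw_spec(3)[OF w] by (simp add: barT_rw[OF w])
  show ?thesis
  proof (cases "len n x = len n w")
    case True
    have "barT n w x = tb n w x"
      using T2[OF r] True rw_spec[OF w] by (simp add: barT_rw[OF w])
    then have "x = w" using ne w by (simp add: tb_def split: if_splits)
    then show ?thesis using x by simp
  next
    case False then show ?thesis using le x by simp
  qed
qed

lemma barT_diag: "w \<in> Sn n \<Longrightarrow> barT n w w = 1"
  using T2[OF reduced_rw, of w n w] rw_spec[of w n] by (simp add: barT_rw tb_def)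

definition isKL :: "nat \<Rightarrow> perm \<Rightarrow> hecke \<Rightarrow> bool" where
  "isKL n w c \<longleftrightarrow> (\<forall>x. x \<notin> Sn n \<longrightarrow> c x = 0) \<and> hbar n c = c \<and> c w = 1 \<and>
      (\<forall>y \<in> Sn n. y \<noteq> w \<longrightarrow> in_vZv (c y))"

lemma hbar_apply: "hbar n h x = (\<Sum>w\<in>Sn n. lbar (h w) * barT n w x)"
  by (simp add: hbar_def)

lemma hbar_diff: "hbar n (\<lambda>x. a x - b x) = (\<lambda>x. hbar n a x - hbar n b x)"
  by (rule ext) (simp add: hbar_apply lbar_minus algebra_simps sum_subtractf)

lemma hbar_scale: "hbar n (\<lambda>x. c * a x) = (\<lambda>x. lbar c * hbar n a x)"
  by (rule ext) (simp add: hbar_apply lbar_mult sum_distrib_left algebra_simps)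

lemma KL_unique:
  assumes w: "w \<in> Sn n" and c: "isKL n w c" and d: "isKL n w c'"
  shows "c = c'"
proof (rule ccontr)
  assume neq: "c \<noteq> c'"
  define d where "d = (\<lambda>x. c x - c' x)"
  have hd: "hbar n d = d" using c d unfolding d_def isKL_def by (simp add: hbar_diff)
  have dw: "d w = 0" using c d unfolding d_def isKL_def by simp
  have dout: "x \<notin> Sn n \<Longrightarrow> d x = 0" for x using c d unfolding d_def isKL_def by simp
  have dv: "y \<in> Sn n \<Longrightarrow> y \<noteq> w \<Longrightarrow> in_vZv (d y)" for y
    using c d unfolding d_def isKL_def by (simp add: vZv_diff)
  define S where "S = {y \<in> Sn n. d y \<noteq> 0}"
  have fS: "finite S" by (simp add: S_def)
  have neS: "S \<noteq> {}"
  proof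
    assume "S = {}"
    then have "d x = 0" for x using dout by (cases "x \<in> Sn n") (auto simp: S_def)
    then have "c = c'" by (auto simp: d_def fun_eq_iff)
    with neq show False by simp
  qed
  define M where "M = Max (len n ` S)"
  obtain y where y: "y \<in> S" "len n y = M"
    using Max_in[of "len n ` S"] fS neS unfolding M_def by (metis finite_imageI image_is_empty imageE)
  have ym: "z \<in> S \<Longrightarrow> len n z \<le> len n y" for z using Max_ge[of "len n ` S"] fS y(2) unfolding M_def by auto
  have ySn: "y \<in> Sn n" and dy: "d y \<noteq> 0" using y(1) by (auto simp: S_def)
  have "hbar n d y = (\<Sum>u\<in>Sn n. lbar (d u) * barT n u y)" by (rule hbar_apply)
  also have "\<dots> = lbar (d y) * barT n y y"
  proof (rule sum.remove[OF Sn_finite ySn, THEN trans])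
    have "(\<Sum>u\<in>Sn n - {y}. lbar (d u) * barT n u y) = 0"
    proof (rule sum.neutral, rule ballI)
      fix u assume u: "u \<in> Sn n - {y}"
      show "lbar (d u) * barT n u y = 0"
      proof (cases "d u = 0")
        case True then show ?thesis by simp
      next
        case False
        then have "u \<in> S" using u by (simp add: S_def)
        then have "len n u \<le> len n y" by (rule ym)
        then have "barT n u y = 0" using barT_tri[of u n y] u by auto
        then show ?thesis by simp
      qed
    qed
    then show "lbar (d y) * barT n y y + (\<Sum>u\<in>Sn n - {y}. lbar (d u) * barT n u y) = lbar (d y) * barT n y y"
      by simp
  qed
  also have "\<dots> = lbar (d y)" using barT_diag[OF ySn] by simp
  finally have "lbar (d y) = d y" using hd by simp
  moreover have "y \<noteq> w" using dy dw by auto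
  ultimately have "d y = 0" using vZv_bar dv[OF ySn] by blast
  with dy show False by simp
qed

lemma KL_eq:
  assumes w: "w \<in> Sn n" and c: "isKL n w c"
  shows "KL n w = c"
  unfolding KL_def
proof (rule the_equality)
  show "(\<forall>x. x \<notin> Sn n \<longrightarrow> c x = 0) \<and> hbar n c = c \<and> c w = 1 \<and> (\<forall>y\<in>Sn n. y \<noteq> w \<longrightarrow> in_vZv (c y))"
    using c by (simp add: isKL_def)
  fix c' assume "(\<forall>x. x \<notin> Sn n \<longrightarrow> c' x = 0) \<and> hbar n c' = c' \<and> c' w = 1 \<and> (\<forall>y\<in>Sn n. y \<noteq> w \<longrightarrow> in_vZv (c' y))"
  then have "isKL n w c'" by (simp add: isKL_def)
  then show "c' = c" using KL_unique[OF w c] by simp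
qed

lemma Bl_barT:
  assumes u: "u \<in> Sn n" and i: "1 \<le> i" "i < n"
  shows "Bl n i (barT n u) = (\<lambda>x. barT n (sref i \<circ> u) x +
            (if len n (sref i \<circ> u) < len n u then (vv - vinv) * barT n u x else 0))"
proof -
  have step: "barT n (sref i \<circ> v) = Bl n i (barT n v)" if v: "v \<in> Sn n" and l: "len n (sref i \<circ> v) = Suc (len n v)" for v
  proof -
    have r: "reduced n (i # rw n v)"
      using rw_spec[OF v] i l by (simp add: reduced_def)
    have "barT n (wprod (i # rw n v)) = foldr (Bl n) (i # rw n v) (hone n)" by (rule barT_word[OF r])
    then show ?thesis using rw_spec[OF v] by (simp add: barT_Bl)
  qed
  show ?thesis
  proof (cases "len n (sref i \<circ> u) = Suc (len n u)")
    case True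
    then show ?thesis using step[OF u True] by simp
  next
    case False
    then have l: "len n u = Suc (len n (sref i \<circ> u))" using len_lcases[OF u i] by simp
    have su: "sref i \<circ> u \<in> Sn n" by (rule Sn_lcomp[OF i u])
    have bu: "barT n u = Bl n i (barT n (sref i \<circ> u))" using step[OF su] l by simp
    have "Bl n i (barT n u) = (\<lambda>x. barT n (sref i \<circ> u) x - cc * barT n u x)"
      unfolding bu by (rule Bl_Bl[OF barT_sup[OF su] i])
    then show ?thesis using l by (simp add: algebra_simps)
  qed
qed

lemma hbar_Ls:
  assumes i: "1 \<le> i" "i < n"
  shows "hbar n (Ls n i h) = Bl n i (hbar n h)"
proof
  fix x
  have r: "(\<Sum>u\<in>Sn n. lbar (h u) * barT n (sref i \<circ> u) x) = (\<Sum>w\<in>Sn n. lbar (h (sref i \<circ> w)) * barT n w x)"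
    by (rule sum.reindex_bij_witness[where i="\<lambda>w. sref i \<circ> w" and j="\<lambda>w. sref i \<circ> w"])
       (auto simp: Sn_lcomp[OF i])
  have "Bl n i (hbar n h) x = (\<Sum>u\<in>Sn n. lbar (h u) * Bl n i (barT n u) x)"
    unfolding hbar_def Bl_lin ..
  also have "\<dots> = (\<Sum>u\<in>Sn n. lbar (h u) * barT n (sref i \<circ> u) x +
      (if len n (sref i \<circ> u) < len n u then lbar (h u) * ((vv - vinv) * barT n u x) else 0))"
    by (rule sum.cong) (simp_all add: Bl_barT[OF _ i] algebra_simps)
  also have "\<dots> = (\<Sum>w\<in>Sn n. lbar (h (sref i \<circ> w)) * barT n w x) +
      (\<Sum>u\<in>Sn n. if len n (sref i \<circ> u) < len n u then lbar (h u) * ((vv - vinv) * barT n u x) else 0)"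
    by (simp add: sum.distrib r)
  also have "\<dots> = (\<Sum>w\<in>Sn n. lbar (Ls n i h w) * barT n w x)"
    unfolding sum.distrib[symmetric]
    by (rule sum.cong) (auto simp: Ls_apply lbar_add lbar_mult lbar_minus vv_vp vinv_vp algebra_simps)
  finally show "hbar n (Ls n i h) x = Bl n i (hbar n h) x" by (simp add: hbar_apply)
qed

lemma hbar_foldr: "set xs \<subseteq> {1..<n} \<Longrightarrow> hbar n (foldr (Ls n) xs h) = foldr (Bl n) xs (hbar n h)"
  by (induction xs) (auto simp: hbar_Ls)


lemma vinv_vp_mult: "vinv * vp k = vp (k - 1)"
  by (simp add: vinv_vp vp_add)

lemma vv_vp_mult: "vv * vp k = vp (k + 1)"
  by (simp add: vv_vp vp_add add.commute)

lemma eig_gen: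
  assumes i: "1 \<le> i" "i < n" and P: "\<And>x. x \<in> Sn n \<Longrightarrow> P (sref i \<circ> x) \<longleftrightarrow> P x"
  shows "Ls n i (\<lambda>x. if x \<in> Sn n \<and> P x then vp (K - int (len n x)) else 0) =
         (\<lambda>x. vinv * (if x \<in> Sn n \<and> P x then vp (K - int (len n x)) else 0))"
  (is "Ls n i ?f = _")
proof
  fix x
  show "Ls n i ?f x = vinv * ?f x"
  proof (cases "x \<in> Sn n")
    case False
    then have "sref i \<circ> x \<notin> Sn n" using Sn_lcomp_iff[OF i] by simp
    then show ?thesis using False by (simp add: Ls_apply)
  next
    case True
    have sx: "sref i \<circ> x \<in> Sn n" by (rule Sn_lcomp[OF i True])
    show ?thesis
    proof (cases "P x")
      case False
      then have "\<not> P (sref i \<circ> x)" using P[OF True] by simp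
      then show ?thesis using False by (simp add: Ls_apply)
    next
      case Px: True
      then have Psx: "P (sref i \<circ> x)" using P[OF True] by simp
      show ?thesis
      proof (cases "len n (sref i \<circ> x) = Suc (len n x)")
        case True
        then show ?thesis using Px Psx sx \<open>x \<in> Sn n\<close>
          by (simp add: Ls_apply vinv_vp_mult algebra_simps)
      next
        case False
        then have l: "len n x = Suc (len n (sref i \<circ> x))" using len_lcases[OF \<open>x \<in> Sn n\<close> i] by simp
        have "Ls n i ?f x = vp (K - int (len n x) + 1) + (vinv - vv) * vp (K - int (len n x))"
          using Px Psx sx \<open>x \<in> Sn n\<close> l by (simp add: Ls_apply algebra_simps)
        also have "\<dots> = vp (K - int (len n x) - 1)"
          by (simp add: algebra_simps vinv_vp_mult vv_vp_mult)
        finally show ?thesis using Px \<open>x \<in> Sn n\<close> by (simp add: vinv_vp_mult)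
      qed
    qed
  qed
qed

definition Ee :: "nat \<Rightarrow> nat \<Rightarrow> hecke" where
  "Ee n m = (\<lambda>x. if x \<in> Sn n \<and> x \<in> Sn m then vp (int (len n (revm m)) - int (len n x)) else 0)"

lemma Ee_eig:
  assumes mn: "m \<le> n" and i: "1 \<le> i" "i < m"
  shows "Ls n i (Ee n m) = (\<lambda>x. vinv * Ee n m x)"
  unfolding Ee_def by (rule eig_gen) (use i mn Sn_lcomp_iff[OF i] in auto)

lemma Ee_out: "x \<notin> Sn m \<Longrightarrow> Ee n m x = 0" by (simp add: Ee_def)

lemma Ee_in: "m \<le> n \<Longrightarrow> x \<in> Sn m \<Longrightarrow> Ee n m x = vp (int (len n (revm m)) - int (len n x))"
  by (simp add: Ee_def Sn_mono)

lemma eig_unique: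
  assumes mn: "m \<le> n" and h0: "\<And>x. x \<notin> Sn m \<Longrightarrow> h x = 0"
    and eig: "\<And>i. 1 \<le> i \<Longrightarrow> i < m \<Longrightarrow> Ls n i h = (\<lambda>x. vinv * h x)"
  shows "h = (\<lambda>x. h (revm m) * Ee n m x)"
proof -
  have main: "h x = vp (int (len n (revm m)) - int (len n x)) * h (revm m)" if x: "x \<in> Sn m" for x
    using x
  proof (induction "len n (revm m) - len n x" arbitrary: x rule: less_induct)
    case less
    show ?case
    proof (cases "x = revm m")
      case True then show ?thesis by simp
    next
      case False
      then obtain i where i: "1 \<le> i" "i < m" "lasc x i" using not_rev_asc[OF less.prems] by blast
      have xn: "x \<in> Sn n" by (rule Sn_mono[OF mn less.prems])
      have l: "len n (sref i \<circ> x) = Suc (len n x)" by (rule len_lasc[OF xn i(1)]) (use i mn in auto)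
      have sx: "sref i \<circ> x \<in> Sn m" by (rule Sn_lcomp[OF i(1,2) less.prems])
      have le: "len n (sref i \<circ> x) \<le> len n (revm m)" by (rule len_le_rev[OF mn sx])
      have IH: "h (sref i \<circ> x) = vp (int (len n (revm m)) - int (len n (sref i \<circ> x))) * h (revm m)"
        by (rule less.hyps[OF _ sx]) (use l le in simp)
      have "Ls n i h x = vinv * h x" using eig[OF i(1,2)] by (rule fun_cong)
      then have e: "h (sref i \<circ> x) = vinv * h x" using l by (simp add: Ls_apply)
      have "h x = vv * (vinv * h x)" using vv_vinv by (simp add: mult.assoc[symmetric])
      also have "\<dots> = vv * h (sref i \<circ> x)" using e by simp
      also have "\<dots> = vv * vp (int (len n (revm m)) - int (len n x) - 1) * h (revm m)"
        using IH l by (simp add: algebra_simps)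
      also have "\<dots> = vp (int (len n (revm m)) - int (len n x)) * h (revm m)"
        by (simp add: vv_vp_mult)
      finally show ?thesis .
    qed
  qed
  show ?thesis
  proof
    fix x show "h x = h (revm m) * Ee n m x"
      using main[of x] h0[of x] Ee_in[OF mn, of x] Ee_out[of x m n] by (cases "x \<in> Sn m") (simp_all add: mult.commute)
  qed
qed

definition supm :: "nat \<Rightarrow> hecke \<Rightarrow> bool" where
  "supm m h \<longleftrightarrow> (\<forall>x. x \<notin> Sn m \<longrightarrow> h x = 0)"

lemma supm_Bl:
  assumes "supm m h" "1 \<le> i" "i < m" shows "supm m (Bl n i h)"
  unfolding supm_def Bl_apply using assms Sn_lcomp_iff[OF assms(2,3)] by (simp add: supm_def)

lemma supm_foldr_Bl: "supm m h \<Longrightarrow> set xs \<subseteq> {1..<m} \<Longrightarrow> supm m (foldr (Bl n) xs h)"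
  by (induction xs) (auto intro: supm_Bl)

lemma barT_supm:
  assumes mn: "m \<le> n" and w: "w \<in> Sn m"
  shows "supm m (barT n w)"
proof -
  obtain xs where xs: "set xs \<subseteq> {1..<m}" "wprod xs = w" "length xs = len n w"
    using rw_exists[OF mn w] by blast
  have r: "reduced n xs" using xs mn by (auto simp: reduced_def)
  have "barT n w = foldr (Bl n) xs (hone n)" using barT_word[OF r] xs(2) by simp
  moreover have "supm m (foldr (Bl n) xs (hone n))"
    by (rule supm_foldr_Bl[OF _ xs(1)]) (simp add: supm_def hone_def tb_def)
  ultimately show ?thesis by simp
qed

lemma hbar_Ee:
  assumes mn: "m \<le> n"
  shows "hbar n (Ee n m) = Ee n m"
proof -
  define H where "H = hbar n (Ee n m)"
  have h0: "H x = 0" if x: "x \<notin> Sn m" for x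
  proof -
    have "H x = (\<Sum>w\<in>Sn n. lbar (Ee n m w) * barT n w x)" by (simp add: H_def hbar_apply)
    also have "\<dots> = 0"
    proof (rule sum.neutral, rule ballI)
      fix w assume "w \<in> Sn n"
      show "lbar (Ee n m w) * barT n w x = 0"
      proof (cases "w \<in> Sn m")
        case True
        then have "barT n w x = 0" using barT_supm[OF mn True] x by (simp add: supm_def)
        then show ?thesis by simp
      next
        case False then show ?thesis by (simp add: Ee_out)
      qed
    qed
    finally show ?thesis .
  qed
  have eig: "Ls n i H = (\<lambda>x. vinv * H x)" if i: "1 \<le> i" "i < m" for i
  proof -
    have i': "1 \<le> i" "i < n" using i mn by auto
    have "Bl n i H = hbar n (Ls n i (Ee n m))" unfolding H_def by (rule hbar_Ls[OF i', symmetric])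
    also have "\<dots> = hbar n (\<lambda>x. vinv * Ee n m x)" by (simp only: Ee_eig[OF mn i])
    also have "\<dots> = (\<lambda>x. vv * H x)" by (simp add: hbar_scale H_def vinv_vp vv_vp)
    finally have b: "Bl n i H = (\<lambda>x. vv * H x)" .
    show ?thesis
    proof
      fix x
      have "Bl n i H x = Ls n i H x + (vv - vinv) * H x" by (simp add: Bl_def hadd_def hscale_def)
      then show "Ls n i H x = vinv * H x" using b by (simp add: fun_eq_iff algebra_simps)
    qed
  qed
  have rv: "revm m \<in> Sn m" by (rule revm_Sn)
  have rvn: "revm m \<in> Sn n" by (rule Sn_mono[OF mn rv])
  have top: "H (revm m) = 1"
  proof -
    have "H (revm m) = (\<Sum>w\<in>Sn n. lbar (Ee n m w) * barT n w (revm m))" by (simp add: H_def hbar_apply)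
    also have "\<dots> = lbar (Ee n m (revm m)) * barT n (revm m) (revm m)"
    proof (rule sum.remove[OF Sn_finite rvn, THEN trans])
      have "(\<Sum>w\<in>Sn n - {revm m}. lbar (Ee n m w) * barT n w (revm m)) = 0"
      proof (rule sum.neutral, rule ballI)
        fix w assume w: "w \<in> Sn n - {revm m}"
        show "lbar (Ee n m w) * barT n w (revm m) = 0"
        proof (cases "w \<in> Sn m")
          case True
          have "len n w \<le> len n (revm m)" by (rule len_le_rev[OF mn True])
          then have "barT n w (revm m) = 0" using barT_tri[of w n "revm m"] w by auto
          then show ?thesis by simp
        next
          case False then show ?thesis by (simp add: Ee_out)
        qed
      qed
      then show "lbar (Ee n m (revm m)) * barT n (revm m) (revm m) +
          (\<Sum>w\<in>Sn n - {revm m}. lbar (Ee n m w) * barT n w (revm m)) =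
          lbar (Ee n m (revm m)) * barT n (revm m) (revm m)" by simp
    qed
    also have "\<dots> = 1" using barT_diag[OF rvn] Ee_in[OF mn rv] by simp
    finally show ?thesis .
  qed
  have "H = (\<lambda>x. H (revm m) * Ee n m x)" by (rule eig_unique[OF mn h0 eig])
  then show ?thesis using top by (simp add: H_def)
qed

lemma isKL_Ee:
  assumes mn: "m \<le> n"
  shows "isKL n (revm m) (Ee n m)"
  unfolding isKL_def
proof (intro conjI allI impI ballI)
  fix x assume "x \<notin> Sn n" then show "Ee n m x = 0" by (simp add: Ee_def)
next
  show "hbar n (Ee n m) = Ee n m" by (rule hbar_Ee[OF mn])
next
  show "Ee n m (revm m) = 1" using Ee_in[OF mn revm_Sn] by simp
next
  fix y assume y: "y \<in> Sn n" "y \<noteq> revm m"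
  show "in_vZv (Ee n m y)"
  proof (cases "y \<in> Sn m")
    case True
    have "len n y \<le> len n (revm m)" by (rule len_le_rev[OF mn True])
    moreover have "len n y \<noteq> len n (revm m)" using len_eq_rev[OF mn True] y(2) by auto
    ultimately show ?thesis using Ee_in[OF mn True] by (simp add: vZv_vp)
  next
    case False then show ?thesis by (simp add: Ee_out)
  qed
qed

lemma KL_longest:
  assumes mn: "m \<le> n"
  shows "KL n (longest n {1..<m}) = Ee n m"
  unfolding longest_rev[OF mn]
  by (rule KL_eq[OF Sn_mono[OF mn revm_Sn] isKL_Ee[OF mn]])


lemma upt_Cons': "j < n \<Longrightarrow> [j..<n] = j # [Suc j..<n]"
  by (simp add: upt_rec)

lemma dj_apply:
  assumes "j \<le> n"
  shows "wprod [j..<n] k = (if k < j \<or> n < k then k else if k = n then j else Suc k)"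
  using assms
proof (induction "n - j" arbitrary: j)
  case 0 then have "j = n" by simp
  then show ?case by simp
next
  case (Suc d)
  then have jn: "j < n" by simp
  have IH: "wprod [Suc j..<n] k = (if k < Suc j \<or> n < k then k else if k = n then Suc j else Suc k)"
    by (rule Suc.hyps) (use Suc.hyps(2) jn in auto)
  have "wprod [j..<n] k = sref j (wprod [Suc j..<n] k)" by (simp add: upt_Cons'[OF jn])
  then show ?case unfolding IH using jn by (auto simp: sref_def transpose_def)
qed

lemma Sn_last:
  assumes n: "1 \<le> n"
  shows "x \<in> Sn (n - 1) \<longleftrightarrow> x \<in> Sn n \<and> x n = n"
proof
  assume x: "x \<in> Sn (n - 1)"
  have "n \<notin> {1..n - 1}" using n by auto
  then show "x \<in> Sn n \<and> x n = n" using Sn_mono[OF _ x, of n] Sn_out[OF x, of n] by simp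
next
  assume x: "x \<in> Sn n \<and> x n = n"
  show "x \<in> Sn (n - 1)" unfolding Sn_def mem_Collect_eq
  proof (rule inj_imp_permutes)
    show "inj_on x {1..n - 1}" using Sn_inj[of x n] x by (auto intro: inj_onI)
    show "finite {1..n - 1}" by simp
    fix k
    show "k \<in> {1..n - 1} \<Longrightarrow> x k \<in> {1..n - 1}"
    proof -
      assume k: "k \<in> {1..n - 1}"
      then have "x k \<in> {1..n}" using Sn_range[of x n k] x by auto
      moreover have "x k \<noteq> n" using x Sn_inj[of x n k n] k by auto
      ultimately show "x k \<in> {1..n - 1}" by auto
    qed
    show "k \<notin> {1..n - 1} \<Longrightarrow> x k = k"
      using x Sn_out[of x n k] by (cases "k = n") auto
  qed
qed

lemma Sn_comp: "x \<in> Sn n \<Longrightarrow> y \<in> Sn n \<Longrightarrow> x \<circ> y \<in> Sn n"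
  unfolding Sn_def mem_Collect_eq by (rule permutes_compose)

lemma dj_Sn: "1 \<le> j \<Longrightarrow> wprod [j..<n] \<in> Sn n"
  by (rule wprod_Sn) auto

lemma len_dj:
  assumes n: "1 \<le> n" and y: "y \<in> Sn (n - 1)" and j: "1 \<le> j" "j \<le> n"
  shows "len n (wprod [j..<n] \<circ> y) = (n - j) + len n y"
  using j
proof (induction "n - j" arbitrary: j)
  case 0 then have "j = n" by simp
  then show ?case by (simp add: id_def)
next
  case (Suc d)
  then have jn: "j < n" by simp
  have IH: "len n (wprod [Suc j..<n] \<circ> y) = (n - Suc j) + len n y"
    by (rule Suc.hyps) (use Suc.hyps(2) jn in auto)
  define z where "z = wprod [Suc j..<n] \<circ> y"
  have yn: "y \<in> Sn n" using y Sn_last[OF n] by simp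
  have ynn: "y n = n" using y Sn_last[OF n] by simp
  have zs: "z \<in> Sn n" unfolding z_def by (rule Sn_comp[OF dj_Sn yn]) simp
  define a where "a = inv y j"
  have iy: "inv y \<in> Sn (n - 1)" by (rule Sn_inv[OF y])
  have a1: "a \<in> {1..n - 1}" unfolding a_def by (rule Sn_range[OF iy]) (use Suc.prems jn in auto)
  have ya: "y a = j" unfolding a_def by (rule Sn_inv_app[OF y])
  have za: "z a = j" unfolding z_def using ya dj_apply[of "Suc j" n j] jn by simp
  have zn: "z n = Suc j" unfolding z_def using ynn dj_apply[of "Suc j" n n] jn by simp
  have an: "a < n" using a1 n by auto
  have l: "len n (sref j \<circ> z) = Suc (len n z)"
    by (rule len_lmult[OF zs Suc.prems(1) jn za zn an])
  have "wprod [j..<n] \<circ> y = sref j \<circ> z" unfolding z_def by (simp add: upt_Cons'[OF jn] o_assoc)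
  then show ?case using l IH jn unfolding z_def by simp
qed

lemma revm_dj:
  assumes n: "1 \<le> n"
  shows "wprod [1..<n] \<circ> revm (n - 1) = revm n"
proof
  fix k
  show "(wprod [1..<n] \<circ> revm (n - 1)) k = revm n k"
    using dj_apply[of 1 n] n by (auto simp: revm_def)
qed

definition NI :: "nat \<Rightarrow> int" where "NI n = int (len n (revm (n - 1)))"

lemma N_NI:
  assumes n: "1 \<le> n"
  shows "int (len n (revm n)) = NI n + int n - 1"
proof -
  have "len n (wprod [1..<n] \<circ> revm (n - 1)) = (n - 1) + len n (revm (n - 1))"
    by (rule len_dj[OF n revm_Sn]) (use n in auto)
  then show ?thesis unfolding revm_dj[OF n] NI_def using n by simp
qed

lemma len_cox:
  assumes n: "1 \<le> n"
  shows "len n (wprod [1..<n]) = n - 1"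
  using len_dj[OF n Sn_id, of 1] n by simp

definition Xk :: "nat \<Rightarrow> nat \<Rightarrow> hecke" where
  "Xk n k = (\<lambda>x. if x \<in> Sn n \<and> x n = k then vp (NI n + int n - int k - int (len n x)) else 0)"

definition Yk :: "nat \<Rightarrow> nat \<Rightarrow> hecke" where
  "Yk n k = (\<lambda>x. if x \<in> Sn n \<and> x n = k then vp (NI n + int n - int k - int (len n x))
     else if x \<in> Sn n \<and> k < x n then (vv - vinv) * vp (NI n + int n - int k - 1 - int (len n x)) else 0)"

lemma Xk_n: "1 \<le> n \<Longrightarrow> Xk n n = Ee n (n - 1)"
proof (rule ext)
  fix x assume n: "1 \<le> n"
  have iff: "x \<in> Sn (n - 1) \<longleftrightarrow> x \<in> Sn n \<and> x n = n" by (rule Sn_last[OF n])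
  show "Xk n n x = Ee n (n - 1) x"
  proof (cases "x \<in> Sn n \<and> x n = n")
    case True then show ?thesis using iff by (simp add: Xk_def Ee_def NI_def)
  next
    case False then show ?thesis using iff unfolding Xk_def Ee_def by auto
  qed
qed

lemma Yk_n: "1 \<le> n \<Longrightarrow> Yk n n = Ee n (n - 1)"
proof (rule ext)
  fix x assume n: "1 \<le> n"
  have "x \<in> Sn n \<Longrightarrow> x n \<le> n" using Sn_range[of x n n] n by auto
  moreover have iff: "x \<in> Sn (n - 1) \<longleftrightarrow> x \<in> Sn n \<and> x n = n" by (rule Sn_last[OF n])
  ultimately show "Yk n n x = Ee n (n - 1) x"
  proof (cases "x \<in> Sn n \<and> x n = n")
    case True then show ?thesis using iff by (simp add: Yk_def Ee_def NI_def)
  next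
    case False then show ?thesis using iff \<open>x \<in> Sn n \<Longrightarrow> x n \<le> n\<close> unfolding Yk_def Ee_def by auto
  qed
qed

lemma pos_lt_n:
  assumes x: "x \<in> Sn n" and v: "v \<in> {1..n}" and ne: "x n \<noteq> v"
  shows "inv x v < n" "x (inv x v) = v"
proof -
  have ix: "inv x \<in> Sn n" by (rule Sn_inv[OF x])
  have "inv x v \<in> {1..n}" by (rule Sn_range[OF ix v])
  moreover have "inv x v \<noteq> n" using ne Sn_inv_app[OF x, of v] by auto
  ultimately show "inv x v < n" by auto
  show "x (inv x v) = v" by (rule Sn_inv_app[OF x])
qed

lemma desc_last:
  assumes x: "x \<in> Sn n" and k: "1 \<le> k" "k < n" and xn: "x n = k"
  shows "len n x = Suc (len n (sref k \<circ> x))"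
proof -
  have "inv x (Suc k) < n" "x (inv x (Suc k)) = Suc k" using pos_lt_n[OF x, of "Suc k"] k xn by auto
  then show ?thesis using len_lmult_down[OF x k _ xn] by blast
qed

lemma asc_last:
  assumes x: "x \<in> Sn n" and k: "1 \<le> k" "k < n" and xn: "x n = Suc k"
  shows "len n (sref k \<circ> x) = Suc (len n x)"
proof -
  have "inv x k < n" "x (inv x k) = k" using pos_lt_n[OF x, of k] k xn by auto
  then show ?thesis using len_lmult[OF x k _ xn] by blast
qed

lemma Ls_Xk:
  assumes k: "1 \<le> k" "k < n"
  shows "Ls n k (Xk n (Suc k)) = Xk n k"
proof
  fix x
  show "Ls n k (Xk n (Suc k)) x = Xk n k x"
  proof (cases "x \<in> Sn n")
    case False
    then have "sref k \<circ> x \<notin> Sn n" using Sn_lcomp_iff[OF k] by simp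
    then show ?thesis using False by (simp add: Ls_apply Xk_def)
  next
    case True
    have sx: "sref k \<circ> x \<in> Sn n" by (rule Sn_lcomp[OF k True])
    have sxn: "(sref k \<circ> x) n = sref k (x n)" by simp
    show ?thesis
    proof (cases "x n = k")
      case c: True
      have l: "len n x = Suc (len n (sref k \<circ> x))" by (rule desc_last[OF True k c])
      show ?thesis using c l True sx by (simp add: Ls_apply Xk_def sref_def algebra_simps)
    next
      case c1: False
      show ?thesis
      proof (cases "x n = Suc k")
        case c: True
        have l: "len n (sref k \<circ> x) = Suc (len n x)" by (rule asc_last[OF True k c])
        show ?thesis using c l True sx by (simp add: Ls_apply Xk_def sref_def)
      next
        case c2: False
        have "sref k (x n) = x n" using c1 c2 by (simp add: sref_def)
        then show ?thesis using c1 c2 True sx by (simp add: Ls_apply Xk_def)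
      qed
    qed
  qed
qed

lemma Bl_Yk:
  assumes k: "1 \<le> k" "k < n"
  shows "Bl n k (Yk n (Suc k)) = Yk n k"
proof
  fix x
  show "Bl n k (Yk n (Suc k)) x = Yk n k x"
  proof (cases "x \<in> Sn n")
    case False
    then have "sref k \<circ> x \<notin> Sn n" using Sn_lcomp_iff[OF k] by simp
    then show ?thesis using False by (simp add: Bl_apply Yk_def)
  next
    case True
    have sx: "sref k \<circ> x \<in> Sn n" by (rule Sn_lcomp[OF k True])
    show ?thesis
    proof (cases "x n = k")
      case c: True
      have l: "len n x = Suc (len n (sref k \<circ> x))" by (rule desc_last[OF True k c])
      show ?thesis using c l True sx by (simp add: Bl_apply Yk_def sref_def algebra_simps)
    next
      case c1: False
      show ?thesis
      proof (cases "x n = Suc k")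
        case c: True
        have l: "len n (sref k \<circ> x) = Suc (len n x)" by (rule asc_last[OF True k c])
        show ?thesis using c l True sx by (simp add: Bl_apply Yk_def sref_def algebra_simps)
      next
        case c2: False
        have e: "sref k (x n) = x n" using c1 c2 by (simp add: sref_def)
        show ?thesis
        proof (cases "Suc k < x n")
          case c3: True
          define a where "a = NI n + int n - int k - 2 - int (len n x)"
          have Yx: "Yk n (Suc k) x = (vv - vinv) * vp a" using c3 True by (simp add: Yk_def a_def algebra_simps)
          have Ykx: "Yk n k x = (vv - vinv) * vp (a + 1)" using c3 c1 True by (simp add: Yk_def a_def algebra_simps)
          show ?thesis
          proof (cases "len n (sref k \<circ> x) = Suc (len n x)")
            case l: True
            have Ysx: "Yk n (Suc k) (sref k \<circ> x) = (vv - vinv) * vp (a - 1)"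
              using c3 sx e l by (simp add: Yk_def a_def algebra_simps)
            show ?thesis unfolding Bl_apply Ysx Yx Ykx using l
              by (simp add: algebra_simps vv_vp vinv_vp vp_add)
          next
            case False
            then have l: "len n x = Suc (len n (sref k \<circ> x))" using len_lcases[OF True k] by simp
            have Ysx: "Yk n (Suc k) (sref k \<circ> x) = (vv - vinv) * vp (a + 1)"
              using c3 sx e l by (simp add: Yk_def a_def algebra_simps)
            show ?thesis unfolding Bl_apply Ysx Yx Ykx using l
              by (simp add: algebra_simps)
          qed
        next
          case c3: False
          then have "x n < k" using c1 c2 by simp
          then show ?thesis using True sx e by (simp add: Bl_apply Yk_def)
        qed
      qed
    qed
  qed
qed

lemma foldr_Xk:
  assumes n: "1 \<le> n" and k: "1 \<le> k" "k \<le> n"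
  shows "foldr (Ls n) [k..<n] (Ee n (n - 1)) = Xk n k"
  using k
proof (induction "n - k" arbitrary: k)
  case 0 then have "k = n" by simp
  then show ?case using Xk_n[OF n] by simp
next
  case (Suc d)
  then have kn: "k < n" by simp
  have IH: "foldr (Ls n) [Suc k..<n] (Ee n (n - 1)) = Xk n (Suc k)"
    by (rule Suc.hyps) (use Suc.hyps(2) kn in auto)
  show ?case using IH Ls_Xk[OF Suc.prems(1) kn] by (simp add: upt_Cons'[OF kn])
qed

lemma foldr_Yk:
  assumes n: "1 \<le> n" and k: "1 \<le> k" "k \<le> n"
  shows "foldr (Bl n) [k..<n] (Ee n (n - 1)) = Yk n k"
  using k
proof (induction "n - k" arbitrary: k)
  case 0 then have "k = n" by simp
  then show ?case using Yk_n[OF n] by simp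
next
  case (Suc d)
  then have kn: "k < n" by simp
  have IH: "foldr (Bl n) [Suc k..<n] (Ee n (n - 1)) = Yk n (Suc k)"
    by (rule Suc.hyps) (use Suc.hyps(2) kn in auto)
  show ?case using IH Bl_Yk[OF Suc.prems(1) kn] by (simp add: upt_Cons'[OF kn])
qed


lemma hmult_tb:
  assumes c: "c \<in> Sn n"
  shows "hmult n (tb n c) K = Tw n c K"
proof
  fix x
  have "hmult n (tb n c) K x = (\<Sum>w\<in>Sn n. if w = c then Tw n c K x else 0)"
    unfolding hmult_def by (rule sum.cong) (auto simp: tb_def c)
  also have "\<dots> = Tw n c K x" using c by simp
  finally show "hmult n (tb n c) K x = Tw n c K x" .
qed

lemma reduced_cox: "1 \<le> n \<Longrightarrow> reduced n [1..<n]"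
  unfolding reduced_def using len_cox by auto

lemma sup_Ee: "m \<le> n \<Longrightarrow> hsup n (Ee n m)"
  by (simp add: hsup_def Ee_def)

lemma hmult_X1:
  assumes n: "1 \<le> n"
  shows "hmult n (tb n (wprod [1..<n])) (Ee n (n - 1)) = Xk n 1"
proof -
  have c: "wprod [1..<n] \<in> Sn n" by (rule wprod_Sn) auto
  have "Tw n (wprod [1..<n]) (Ee n (n - 1)) = foldr (Ls n) (rw n (wprod [1..<n])) (Ee n (n - 1))"
    by (simp add: Tw_def)
  also have "\<dots> = foldr (Ls n) [1..<n] (Ee n (n - 1))"
    by (rule L_indep[OF reduced_rw[OF c] reduced_cox[OF n] rw_spec(2)[OF c] sup_Ee]) simp
  also have "\<dots> = Xk n 1" by (rule foldr_Xk[OF n]) (use n in auto)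
  finally show ?thesis using hmult_tb[OF c] by simp
qed

lemma hbar_X1:
  assumes n: "1 \<le> n"
  shows "hbar n (Xk n 1) = Yk n 1"
proof -
  have "Xk n 1 = foldr (Ls n) [1..<n] (Ee n (n - 1))" by (rule foldr_Xk[OF n, symmetric]) (use n in auto)
  then have "hbar n (Xk n 1) = foldr (Bl n) [1..<n] (hbar n (Ee n (n - 1)))"
    using hbar_foldr[of "[1..<n]" n] by simp
  also have "\<dots> = foldr (Bl n) [1..<n] (Ee n (n - 1))" using hbar_Ee[of "n - 1" n] by simp
  also have "\<dots> = Yk n 1" by (rule foldr_Yk[OF n]) (use n in auto)
  finally show ?thesis .
qed

definition FF :: "nat \<Rightarrow> hecke" where
  "FF n = hsub (hscale vinv (Ee n n)) (hscale vinv (Xk n 1))"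

lemma Ee_nn: "Ee n n x = (if x \<in> Sn n then vp (int (len n (revm n)) - int (len n x)) else 0)"
  by (simp add: Ee_def)

lemma X1_apply:
  assumes n: "1 \<le> n"
  shows "Xk n 1 x = (if x \<in> Sn n \<and> x n = 1 then vp (int (len n (revm n)) - int (len n x)) else 0)"
proof -
  have e: "NI n + int n - 1 - int (len n x) = int (len n (revm n)) - int (len n x)"
    using N_NI[OF n] by simp
  show ?thesis by (simp only: Xk_def of_nat_1 e)
qed

lemma Y1_apply:
  assumes n: "1 \<le> n"
  shows "Yk n 1 x = (if x \<in> Sn n \<and> x n = 1 then vp (int (len n (revm n)) - int (len n x))
     else if x \<in> Sn n \<and> 1 < x n then (vv - vinv) * vp (int (len n (revm n)) - 1 - int (len n x)) else 0)"
proof -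
  have "NI n + int n - int 1 - int (len n x) = int (len n (revm n)) - int (len n x)"
    using N_NI[OF n] by simp
  moreover have "NI n + int n - int 1 - 1 - int (len n x) = int (len n (revm n)) - 1 - int (len n x)"
    using N_NI[OF n] by simp
  ultimately show ?thesis by (simp add: Yk_def)
qed

lemma FF_apply:
  assumes n: "1 \<le> n"
  shows "FF n x = (if x \<in> Sn n \<and> x n \<noteq> 1 then vp (int (len n (revm n)) - 1 - int (len n x)) else 0)"
  unfolding FF_def hsub_def hscale_def Ee_nn X1_apply[OF n]
  by (simp add: vinv_vp_mult algebra_simps)

lemma hbar_FF:
  assumes n: "1 \<le> n"
  shows "hbar n (FF n) = FF n"
proof -
  have "hbar n (FF n) = (\<lambda>x. vv * Ee n n x - vv * Yk n 1 x)"
    unfolding FF_def hsub_def hscale_def hbar_diff hbar_scale hbar_X1[OF n] hbar_Ee[OF order_refl]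
    by (simp add: vinv_vp vv_vp)
  also have "\<dots> = FF n"
  proof
    fix x
    define N where "N = int (len n (revm n))"
    define l where "l = int (len n x)"
    show "vv * Ee n n x - vv * Yk n 1 x = FF n x"
    proof (cases "x \<in> Sn n")
      case False then show ?thesis unfolding FF_apply[OF n] Ee_nn Y1_apply[OF n] by simp
    next
      case True
      have "x n \<in> {1..n}" by (rule Sn_range[OF True]) (use n in auto)
      then consider "x n = 1" | "1 < x n" by fastforce
      then show ?thesis
      proof cases
        case 1 then show ?thesis unfolding FF_apply[OF n] Ee_nn Y1_apply[OF n] using True by simp
      next
        case 2
        have "vv * vp (N - l) - vv * ((vv - vinv) * vp (N - 1 - l)) = vp (N - 1 - l)"
          by (simp add: algebra_simps vv_vp vinv_vp vp_add)
        then show ?thesis unfolding FF_apply[OF n] Ee_nn Y1_apply[OF n] using True 2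
          by (simp add: N_def l_def)
      qed
    qed
  qed
  finally show ?thesis .
qed

lemma revm_n: "1 \<le> n \<Longrightarrow> revm n n = 1" by (simp add: revm_def)
lemma revm_n1: "2 \<le> n \<Longrightarrow> revm n (n - 1) = 2" by (simp add: revm_def)

lemma len_s1w0:
  assumes n: "2 \<le> n"
  shows "len n (revm n) = Suc (len n (sref 1 \<circ> revm n))"
proof -
  have a: "revm n (n - 1) = Suc 1" "revm n n = 1" using n by (simp_all add: revm_def)
  show ?thesis by (rule len_lmult_down[OF revm_Sn _ _ a]) (use n in auto)
qed

lemma len_bound:
  assumes n: "2 \<le> n" and y: "y \<in> Sn n" and yn: "y n \<noteq> 1" and ne: "y \<noteq> sref 1 \<circ> revm n"
  shows "len n y + 2 \<le> len n (revm n)"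
proof -
  have le: "len n y \<le> len n (revm n)" by (rule len_le_rev[OF order_refl y])
  have ne1: "len n y \<noteq> len n (revm n)"
  proof
    assume "len n y = len n (revm n)"
    then have "y = revm n" by (rule len_eq_rev[OF order_refl y])
    then show False using yn revm_n[of n] n by simp
  qed
  have ne2: "Suc (len n y) \<noteq> len n (revm n)"
  proof
    assume l: "Suc (len n y) = len n (revm n)"
    then have "y \<noteq> revm n" by auto
    then obtain i where i: "1 \<le> i" "i < n" "lasc y i" using not_rev_asc[OF y] by blast
    have "len n (sref i \<circ> y) = Suc (len n y)" by (rule len_lasc[OF y i])
    then have "sref i \<circ> y = revm n" using len_eq_rev[OF order_refl Sn_lcomp[OF i(1,2) y]] l by simp
    then have yy: "y = sref i \<circ> revm n" by (metis sref_sref_comp)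
    then have "y n = sref i 1" using revm_n[of n] n by simp
    then have "i = 1" using yn i by (auto simp: sref_def transpose_def split: if_splits)
    then show False using yy ne by simp
  qed
  show ?thesis using le ne1 ne2 by linarith
qed

lemma isKL_FF:
  assumes n: "2 \<le> n"
  shows "isKL n (sref 1 \<circ> revm n) (FF n)"
  unfolding isKL_def
proof (intro conjI allI impI ballI)
  have n1: "1 \<le> n" using n by simp
  fix x assume "x \<notin> Sn n" then show "FF n x = 0" by (simp add: FF_apply[OF n1])
next
  have n1: "1 \<le> n" using n by simp
  show "hbar n (FF n) = FF n" by (rule hbar_FF[OF n1])
next
  have n1: "1 \<le> n" using n by simp
  have s: "sref 1 \<circ> revm n \<in> Sn n" by (rule Sn_lcomp[OF _ _ revm_Sn]) (use n in auto)
  have v: "(sref 1 \<circ> revm n) n = 2" using revm_n[OF n1] by (simp add: sref_def)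
  show "FF n (sref 1 \<circ> revm n) = 1"
    using s v len_s1w0[OF n] by (simp add: FF_apply[OF n1])
next
  have n1: "1 \<le> n" using n by simp
  fix y assume y: "y \<in> Sn n" "y \<noteq> sref 1 \<circ> revm n"
  show "in_vZv (FF n y)"
  proof (cases "y n = 1")
    case True then show ?thesis by (simp add: FF_apply[OF n1])
  next
    case False
    have "len n y + 2 \<le> len n (revm n)" by (rule len_bound[OF n y(1) False y(2)])
    then show ?thesis using y False by (simp add: FF_apply[OF n1] vZv_vp)
  qed
qed

theorem lemma4p2:
  fixes n :: nat
  assumes "n \<ge> 2"
  shows "KL n (sref 1 \<circ> longest n {1..<n}) =
           hsub (hscale vinv (KL n (longest n {1..<n})))
                (hscale vinv (hmult n (tb n (wprod [1..<n])) (KL n (longest n {1..<n-1}))))"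
proof -
  have n1: "1 \<le> n" using assms by simp
  have s: "sref 1 \<circ> revm n \<in> Sn n" by (rule Sn_lcomp[OF _ _ revm_Sn]) (use assms in auto)
  have "KL n (sref 1 \<circ> longest n {1..<n}) = FF n"
    unfolding longest_rev[OF order_refl] by (rule KL_eq[OF s isKL_FF[OF assms]])
  also have "\<dots> = hsub (hscale vinv (KL n (longest n {1..<n})))
                (hscale vinv (hmult n (tb n (wprod [1..<n])) (KL n (longest n {1..<n-1}))))"
    unfolding FF_def KL_longest[OF order_refl] KL_longest[of "n - 1" n, OF diff_le_self] hmult_X1[OF n1] ..
  finally show ?thesis .
qed

end
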